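(* Let $E^{n+1}$ ($n>1$) be a real affine space, $X\subset E^{n+1}$ a smooth hypersurface, and $\Sigma=\{\sigma: q(\sigma)=1\}$ an ellipsoid, where $q(\sigma)=q(e)+Q(\sigma-e)$ with $Q$ a positive definite quadratic form, $e$ the center and $q(e)<1$. Assume that any line that meets $X$ at least twice or is tangent to $X$ does not touch $\Sigma$. Let $\Phi(x,\sigma)=\langle x-\sigma,\nabla q(\sigma)\rangle$ for $(x,\sigma)\in X\times\Sigma$ and $Z=\{(x,\sigma)\in X\times\Sigma:\Phi(x,\sigma)=0\}$. Then $\mathrm{d}_x\Phi\neq0$ on $Z$, and the map $$\mathrm{D}:Z\times\mathbb{R}_+\to T^*(X)\setminus 0,\qquad \mathrm{D}(x,\sigma,t)=(x,\,t\,\mathrm{d}_x\Phi(x,\sigma))$$ is a diffeomorphism.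
   Context: $\langle\cdot,\cdot\rangle$ denotes pairing of a vector with the covector $\nabla q(\sigma)=\mathrm{d}q(\sigma)$. $\mathrm{d}_x\Phi(x,\sigma)$ denotes the differential of $x\mapsto\Phi(x,\sigma)$ restricted to $T_xX$, i.e. an element of $T^*_xX$. $T^*(X)\setminus0$ is the cotangent bundle with the zero section removed. *)

theory Defs
  imports "HOL-Analysis.Analysis"
begin

fun dirderiv :: "('a::real_normed_vector \<Rightarrow> 'b::real_normed_vector) \<Rightarrow> 'a list \<Rightarrow> 'a \<Rightarrow> 'b" where
  "dirderiv f [] = f"
| "dirderiv f (v # vs) = (\<lambda>x. frechet_derivative (dirderiv f vs) (at x) v)"

definition smooth_on_open :: "'a::real_normed_vector set \<Rightarrow> ('a \<Rightarrow> 'b::real_normed_vector) \<Rightarrow> bool" where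
  "smooth_on_open U f \<longleftrightarrow> open U \<and> (\<forall>vs. dirderiv f vs differentiable_on U)"

definition smooth_on_set :: "'a::real_normed_vector set \<Rightarrow> ('a \<Rightarrow> 'b::real_normed_vector) \<Rightarrow> bool" where
  "smooth_on_set S f \<longleftrightarrow> (\<forall>x\<in>S. \<exists>U F. open U \<and> x \<in> U \<and> smooth_on_open U F \<and> (\<forall>y\<in>S \<inter> U. F y = f y))"

definition diffeomorphism_sets :: "'a::real_normed_vector set \<Rightarrow> 'b::real_normed_vector set \<Rightarrow> ('a \<Rightarrow> 'b) \<Rightarrow> bool" where
  "diffeomorphism_sets S T f \<longleftrightarrow> bij_betw f S T \<and> smooth_on_set S f \<and> smooth_on_set T (inv_into S f)"

definition smooth_hypersurface :: "'a::euclidean_space set \<Rightarrow> bool" where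
  "smooth_hypersurface X \<longleftrightarrow>
     (\<forall>x\<in>X. \<exists>U g. open U \<and> x \<in> U \<and> smooth_on_open U (g :: 'a \<Rightarrow> real) \<and>
        X \<inter> U = {y\<in>U. g y = 0} \<and> (\<forall>y\<in>U. frechet_derivative g (at y) \<noteq> (\<lambda>v. 0)))"

definition tangent_space :: "'a::euclidean_space set \<Rightarrow> 'a \<Rightarrow> 'a set" where
  "tangent_space X x = {v. \<exists>\<gamma> \<epsilon>. \<epsilon> > 0 \<and> (\<forall>t. \<bar>t\<bar> < \<epsilon> \<longrightarrow> \<gamma> t \<in> X) \<and> \<gamma> 0 = x \<and>
                             (\<gamma> has_vector_derivative v) (at 0)}"

(* a covector \<xi> \<in> T*_x X is represented (via the Euclidean inner product) by the unique
   w \<in> T_x X with \<xi> v = w \<bullet> v for all v \<in> T_x X *)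
definition covector_rep :: "'a::euclidean_space set \<Rightarrow> 'a \<Rightarrow> ('a \<Rightarrow> real) \<Rightarrow> 'a" where
  "covector_rep X x \<xi> = (THE w. w \<in> tangent_space X x \<and> (\<forall>v\<in>tangent_space X x. w \<bullet> v = \<xi> v))"

definition cotangent_bundle_minus_zero :: "'a::euclidean_space set \<Rightarrow> ('a \<times> 'a) set" where
  "cotangent_bundle_minus_zero X = {(x, w). x \<in> X \<and> w \<in> tangent_space X x \<and> w \<noteq> 0}"

definition quadratic_form :: "('a::real_vector \<Rightarrow> real) \<Rightarrow> bool" where
  "quadratic_form Q \<longleftrightarrow> (\<exists>B. bilinear B \<and> (\<forall>u v. B u v = B v u) \<and> (\<forall>v. Q v = B v v))"

definition pos_def :: "('a::real_vector \<Rightarrow> real) \<Rightarrow> bool" where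
  "pos_def Q \<longleftrightarrow> (\<forall>v. v \<noteq> 0 \<longrightarrow> Q v > 0)"

end

theory Submission
  imports Defs
begin

lemma dirderiv_append: "dirderiv f (vs @ ws) = dirderiv (dirderiv f ws) vs"
  by (induction vs) auto

lemma fd_cong:
  assumes "open U" "x \<in> U" "\<And>y. y \<in> U \<Longrightarrow> f y = g y"
  shows "frechet_derivative f (at x) = frechet_derivative g (at x)"
proof -
  have "\<And>D. (f has_derivative D) (at x) \<longleftrightarrow> (g has_derivative D) (at x)"
  proof
    fix D assume "(f has_derivative D) (at x)"
    then show "(g has_derivative D) (at x)"
      by (rule has_derivative_transform_within_open[OF _ assms(1,2)]) (simp add: assms(3))
  next
    fix D assume "(g has_derivative D) (at x)"
    then show "(f has_derivative D) (at x)"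
      by (rule has_derivative_transform_within_open[OF _ assms(1,2)]) (simp add: assms(3))
  qed
  then show ?thesis unfolding frechet_derivative_def by simp
qed

lemma diff_on_cong:
  assumes "open U" "f differentiable_on U" "\<And>y. y \<in> U \<Longrightarrow> f y = g y"
  shows "g differentiable_on U"
  unfolding differentiable_on_eq_differentiable_at[OF assms(1)] differentiable_def
proof
  fix x assume x: "x \<in> U"
  then obtain D where "(f has_derivative D) (at x)"
    using assms(2) unfolding differentiable_on_eq_differentiable_at[OF assms(1)] differentiable_def by blast
  then have "(g has_derivative D) (at x)"
    by (rule has_derivative_transform_within_open[OF _ assms(1) x]) (simp add: assms(3))
  then show "\<exists>D. (g has_derivative D) (at x)" by blast
qed

lemma smooth_coinduct:
  assumes U: "open U" and P: "P f"
    and D1: "\<And>f. P f \<Longrightarrow> f differentiable_on U"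
    and D2: "\<And>f v. P f \<Longrightarrow> \<exists>h. P h \<and> (\<forall>x\<in>U. frechet_derivative f (at x) v = h x)"
  shows "smooth_on_open U f"
proof -
  have *: "\<forall>f. P f \<longrightarrow> (\<exists>h. P h \<and> (\<forall>x\<in>U. dirderiv f vs x = h x))" for vs
  proof (induction vs)
    case Nil
    then show ?case by auto
  next
    case (Cons v vs)
    show ?case
    proof (intro allI impI)
      fix f assume "P f"
      then obtain h where h: "P h" "\<forall>x\<in>U. dirderiv f vs x = h x" using Cons by blast
      then obtain h' where h': "P h'" "\<forall>x\<in>U. frechet_derivative h (at x) v = h' x" using D2 by blast
      have "\<forall>x\<in>U. dirderiv f (v # vs) x = h' x"
        using h h' fd_cong[OF U, of _ "dirderiv f vs" h] by simp
      then show "\<exists>h. P h \<and> (\<forall>x\<in>U. dirderiv f (v # vs) x = h x)" using h' by blast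
    qed
  qed
  show ?thesis unfolding smooth_on_open_def
  proof (intro conjI allI U)
    fix vs
    obtain h where "P h" "\<forall>x\<in>U. dirderiv f vs x = h x" using * P by blast
    then show "dirderiv f vs differentiable_on U"
      using diff_on_cong[OF U D1, of h] by metis
  qed
qed

lemma smooth_open: "smooth_on_open U f \<Longrightarrow> open U"
  by (simp add: smooth_on_open_def)

lemma smooth_diff: "smooth_on_open U f \<Longrightarrow> f differentiable_on U"
  unfolding smooth_on_open_def
proof (elim conjE)
  assume "\<forall>vs. dirderiv f vs differentiable_on U"
  then have "dirderiv f [] differentiable_on U" by blast
  then show ?thesis by simp
qed

lemma smooth_deriv: "smooth_on_open U f \<Longrightarrow> smooth_on_open U (\<lambda>x. frechet_derivative f (at x) v)"
  unfolding smooth_on_open_def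
proof (elim conjE, intro conjI allI)
  fix vs assume "open U" "\<forall>vs. dirderiv f vs differentiable_on U"
  then have "dirderiv f (vs @ [v]) differentiable_on U" by blast
  moreover have "dirderiv f (vs @ [v]) = dirderiv (\<lambda>x. frechet_derivative f (at x) v) vs"
    by (simp add: dirderiv_append)
  ultimately show "dirderiv (\<lambda>x. frechet_derivative f (at x) v) vs differentiable_on U" by simp
qed (simp)

lemma smooth_hasderiv: "smooth_on_open U f \<Longrightarrow> x \<in> U \<Longrightarrow> (f has_derivative frechet_derivative f (at x)) (at x)"
  by (meson differentiable_on_eq_differentiable_at frechet_derivative_works smooth_diff smooth_open)

lemma smooth_cong:
  assumes "smooth_on_open U f" "\<And>x. x \<in> U \<Longrightarrow> f x = g x"
  shows "smooth_on_open U g"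
  using assms unfolding smooth_on_open_def
proof (intro conjI allI; elim conjE)
  fix vs assume o: "open U" and d: "\<forall>vs. dirderiv f vs differentiable_on U"
  have eq: "\<forall>x\<in>U. dirderiv f vs x = dirderiv g vs x" for vs
  proof (induction vs)
    case (Cons v vs)
    show ?case
    proof
      fix x assume "x \<in> U"
      then show "dirderiv f (v # vs) x = dirderiv g (v # vs) x"
        using fd_cong[OF o, of x "dirderiv f vs" "dirderiv g vs"] Cons by simp
    qed
  qed (use assms(2) in simp)
  show "dirderiv g vs differentiable_on U"
    using diff_on_cong[OF o, of "dirderiv f vs" "dirderiv g vs"] d eq by blast
qed

lemma smooth_subset: "smooth_on_open U f \<Longrightarrow> open V \<Longrightarrow> V \<subseteq> U \<Longrightarrow> smooth_on_open V f"
  unfolding smooth_on_open_def using differentiable_on_subset by blast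

lemma diff_on_I:
  assumes "open U" "\<And>x. x \<in> U \<Longrightarrow> (f has_derivative D x) (at x)"
  shows "f differentiable_on U"
  unfolding differentiable_on_eq_differentiable_at[OF assms(1)] differentiable_def
  using assms(2) by blast

lemma smooth_coinduct2:
  assumes U: "open U" and P: "P f"
    and D: "\<And>f. P f \<Longrightarrow> \<exists>D. (\<forall>x\<in>U. (f has_derivative D x) (at x)) \<and> (\<forall>v. \<exists>h. P h \<and> (\<forall>x\<in>U. D x v = h x))"
  shows "smooth_on_open U f"
proof (rule smooth_coinduct[where P=P, OF U P])
  fix f assume "P f"
  then obtain D where "\<forall>x\<in>U. (f has_derivative D x) (at x)" using D by blast
  then show "f differentiable_on U" using diff_on_I[OF U] by blast
next
  fix f v assume "P f"
  then obtain D where D: "\<forall>x\<in>U. (f has_derivative D x) (at x)" "\<forall>v. \<exists>h. P h \<and> (\<forall>x\<in>U. D x v = h x)"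
    using D by blast
  then obtain h where "P h" "\<forall>x\<in>U. D x v = h x" by blast
  moreover have "\<forall>x\<in>U. frechet_derivative f (at x) = D x" using D(1) frechet_derivative_at by metis
  ultimately show "\<exists>h. P h \<and> (\<forall>x\<in>U. frechet_derivative f (at x) v = h x)" by auto
qed

lemma smooth_const:
  fixes c :: "'b::real_normed_vector" and U :: "'a::real_normed_vector set"
  shows "open U \<Longrightarrow> smooth_on_open U (\<lambda>x. c)"
  by (rule smooth_coinduct2[where P="\<lambda>h::'a\<Rightarrow>'b. \<exists>c. h = (\<lambda>x. c)"])
     (auto intro!: exI[of _ "\<lambda>x v. 0"])

lemma smooth_bl:
  fixes f :: "'a::real_normed_vector \<Rightarrow> 'b::real_normed_vector"
  shows "open U \<Longrightarrow> bounded_linear f \<Longrightarrow> smooth_on_open U f"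
proof (rule smooth_coinduct2[where P="\<lambda>h::'a\<Rightarrow>'b. bounded_linear h \<or> (\<exists>c. h = (\<lambda>x. c))"])
  fix f :: "'a\<Rightarrow>'b" assume "bounded_linear f \<or> (\<exists>c. f = (\<lambda>x. c))"
  then show "\<exists>D. (\<forall>x\<in>U. (f has_derivative D x) (at x)) \<and> (\<forall>v. \<exists>h. (bounded_linear h \<or> (\<exists>c. h = (\<lambda>x. c))) \<and> (\<forall>x\<in>U. D x v = h x))"
  proof
    assume "bounded_linear f"
    then show ?thesis
      by (intro exI[of _ "\<lambda>x. f"]) (auto intro: bounded_linear_imp_has_derivative)
  next
    assume "\<exists>c. f = (\<lambda>x. c)"
    then show ?thesis
      by (intro exI[of _ "\<lambda>x v. 0"]) auto
  qed
qed auto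

lemma smooth_add:
  fixes f g :: "'a::real_normed_vector \<Rightarrow> 'b::real_normed_vector"
  assumes "smooth_on_open U f" "smooth_on_open U g"
  shows "smooth_on_open U (\<lambda>x. f x + g x)"
proof (rule smooth_coinduct2[where P="\<lambda>h. \<exists>f g. smooth_on_open U f \<and> smooth_on_open U g \<and> h = (\<lambda>x. f x + g x)"])
  show "open U" using assms smooth_open by blast
  show "\<exists>f' g'. smooth_on_open U f' \<and> smooth_on_open U g' \<and> (\<lambda>x. f x + g x) = (\<lambda>x. f' x + g' x)"
    by (rule exI[of _ f], rule exI[of _ g]) (use assms in auto)
  fix h :: "'a \<Rightarrow> 'b" assume "\<exists>f g. smooth_on_open U f \<and> smooth_on_open U g \<and> h = (\<lambda>x. f x + g x)"
  then obtain f g where fg: "smooth_on_open U f" "smooth_on_open U g" "h = (\<lambda>x. f x + g x)" by blast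
  let ?D = "\<lambda>x v. frechet_derivative f (at x) v + frechet_derivative g (at x) v"
  have 1: "\<forall>x\<in>U. (h has_derivative ?D x) (at x)"
    unfolding fg(3) by (intro ballI has_derivative_add smooth_hasderiv[OF fg(1)] smooth_hasderiv[OF fg(2)])
  have 2: "\<exists>h. (\<exists>f g. smooth_on_open U f \<and> smooth_on_open U g \<and> h = (\<lambda>x. f x + g x)) \<and> (\<forall>x\<in>U. ?D x v = h x)" for v
    apply (rule exI[of _ "\<lambda>x. ?D x v"], rule conjI, rule exI[of _ "\<lambda>x. frechet_derivative f (at x) v"], rule exI[of _ "\<lambda>x. frechet_derivative g (at x) v"])
    using smooth_deriv[OF fg(1), of v] smooth_deriv[OF fg(2), of v] by auto
  show "\<exists>D. (\<forall>x\<in>U. (h has_derivative D x) (at x)) \<and>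
         (\<forall>v. \<exists>h. (\<exists>f g. smooth_on_open U f \<and> smooth_on_open U g \<and> h = (\<lambda>x. f x + g x)) \<and> (\<forall>x\<in>U. D x v = h x))"
    by (rule exI[of _ ?D], intro conjI, fact 1, intro allI, rule 2)
qed

lemma smooth_bl_comp:
  fixes f :: "'a::real_normed_vector \<Rightarrow> 'b::real_normed_vector" and L :: "'b \<Rightarrow> 'c::real_normed_vector"
  assumes "smooth_on_open U f" "bounded_linear L"
  shows "smooth_on_open U (\<lambda>x. L (f x))"
proof (rule smooth_coinduct2[where P="\<lambda>h. \<exists>f. smooth_on_open U f \<and> h = (\<lambda>x. L (f x))"])
  show "open U" using assms smooth_open by blast
  show "\<exists>f'. smooth_on_open U f' \<and> (\<lambda>x. L (f x)) = (\<lambda>x. L (f' x))" using assms by blast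
  fix h :: "'a \<Rightarrow> 'c" assume "\<exists>f. smooth_on_open U f \<and> h = (\<lambda>x. L (f x))"
  then obtain f where f: "smooth_on_open U f" "h = (\<lambda>x. L (f x))" by blast
  let ?D = "\<lambda>x v. L (frechet_derivative f (at x) v)"
  have 1: "\<forall>x\<in>U. (h has_derivative ?D x) (at x)"
    unfolding f(2) using bounded_linear.has_derivative[OF assms(2) smooth_hasderiv[OF f(1)]] by blast
  have 2: "\<exists>h. (\<exists>f. smooth_on_open U f \<and> h = (\<lambda>x. L (f x))) \<and> (\<forall>x\<in>U. ?D x v = h x)" for v
    apply (rule exI[of _ "\<lambda>x. ?D x v"], rule conjI, rule exI[of _ "\<lambda>x. frechet_derivative f (at x) v"])
    using smooth_deriv[OF f(1), of v] by auto
  show "\<exists>D. (\<forall>x\<in>U. (h has_derivative D x) (at x)) \<and>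
         (\<forall>v. \<exists>h. (\<exists>f. smooth_on_open U f \<and> h = (\<lambda>x. L (f x))) \<and> (\<forall>x\<in>U. D x v = h x))"
    by (rule exI[of _ ?D], intro conjI, fact 1, intro allI, rule 2)
qed

lemma smooth_pair:
  fixes f :: "'a::real_normed_vector \<Rightarrow> 'b::real_normed_vector" and g :: "'a \<Rightarrow> 'c::real_normed_vector"
  assumes "smooth_on_open U f" "smooth_on_open U g"
  shows "smooth_on_open U (\<lambda>x. (f x, g x))"
proof (rule smooth_coinduct2[where P="\<lambda>h. \<exists>f g. smooth_on_open U f \<and> smooth_on_open U g \<and> h = (\<lambda>x. (f x, g x))"])
  show "open U" using assms smooth_open by blast
  show "\<exists>f' g'. smooth_on_open U f' \<and> smooth_on_open U g' \<and> (\<lambda>x. (f x, g x)) = (\<lambda>x. (f' x, g' x))"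
    by (rule exI[of _ f], rule exI[of _ g]) (use assms in auto)
  fix h :: "'a \<Rightarrow> 'b \<times> 'c" assume "\<exists>f g. smooth_on_open U f \<and> smooth_on_open U g \<and> h = (\<lambda>x. (f x, g x))"
  then obtain f g where fg: "smooth_on_open U f" "smooth_on_open U g" "h = (\<lambda>x. (f x, g x))" by blast
  let ?D = "\<lambda>x v. (frechet_derivative f (at x) v, frechet_derivative g (at x) v)"
  have 1: "\<forall>x\<in>U. (h has_derivative ?D x) (at x)"
    unfolding fg(3) by (intro ballI has_derivative_Pair smooth_hasderiv[OF fg(1)] smooth_hasderiv[OF fg(2)])
  have 2: "\<exists>h. (\<exists>f g. smooth_on_open U f \<and> smooth_on_open U g \<and> h = (\<lambda>x. (f x, g x))) \<and> (\<forall>x\<in>U. ?D x v = h x)" for v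
    apply (rule exI[of _ "\<lambda>x. ?D x v"], rule conjI, rule exI[of _ "\<lambda>x. frechet_derivative f (at x) v"], rule exI[of _ "\<lambda>x. frechet_derivative g (at x) v"])
    using smooth_deriv[OF fg(1), of v] smooth_deriv[OF fg(2), of v] by auto
  show "\<exists>D. (\<forall>x\<in>U. (h has_derivative D x) (at x)) \<and>
         (\<forall>v. \<exists>h. (\<exists>f g. smooth_on_open U f \<and> smooth_on_open U g \<and> h = (\<lambda>x. (f x, g x))) \<and> (\<forall>x\<in>U. D x v = h x))"
    by (rule exI[of _ ?D], intro conjI, fact 1, intro allI, rule 2)
qed

lemma smooth_comp_bl:
  fixes f :: "'b::real_normed_vector \<Rightarrow> 'c::real_normed_vector" and L :: "'a::real_normed_vector \<Rightarrow> 'b"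
  assumes "smooth_on_open U f" "bounded_linear L"
  shows "smooth_on_open (L -` U) (\<lambda>x. f (L x))"
proof (rule smooth_coinduct2[where P="\<lambda>h. \<exists>f. smooth_on_open U f \<and> h = (\<lambda>x. f (L x))"])
  show o: "open (L -` U)"
    by (intro continuous_open_vimage smooth_open[OF assms(1)] linear_continuous_at assms(2))
  show "\<exists>f'. smooth_on_open U f' \<and> (\<lambda>x. f (L x)) = (\<lambda>x. f' (L x))" using assms by blast
  have hd: "((\<lambda>x. f (L x)) has_derivative (\<lambda>v. frechet_derivative f (at (L x)) (L v))) (at x)"
    if "smooth_on_open U f" "x \<in> L -` U" for f x
    using diff_chain_at[OF bounded_linear_imp_has_derivative[OF assms(2)] smooth_hasderiv[OF that(1)], of x] that(2)
    by (simp add: comp_def)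
  fix h :: "'a \<Rightarrow> 'c" assume "\<exists>f. smooth_on_open U f \<and> h = (\<lambda>x. f (L x))"
  then obtain f where f: "smooth_on_open U f" "h = (\<lambda>x. f (L x))" by blast
  let ?D = "\<lambda>x v. frechet_derivative f (at (L x)) (L v)"
  have 1: "\<forall>x\<in>L -` U. (h has_derivative ?D x) (at x)"
    unfolding f(2) using hd f(1) by blast
  have 2: "\<exists>h. (\<exists>f. smooth_on_open U f \<and> h = (\<lambda>x. f (L x))) \<and> (\<forall>x\<in>L -` U. ?D x v = h x)" for v
    apply (rule exI[of _ "\<lambda>x. ?D x v"], rule conjI, rule exI[of _ "\<lambda>y. frechet_derivative f (at y) (L v)"])
    using smooth_deriv[OF f(1), of "L v"] by auto
  show "\<exists>D. (\<forall>x\<in>L -` U. (h has_derivative D x) (at x)) \<and>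
         (\<forall>v. \<exists>h. (\<exists>f. smooth_on_open U f \<and> h = (\<lambda>x. f (L x))) \<and> (\<forall>x\<in>L -` U. D x v = h x))"
    by (rule exI[of _ ?D], intro conjI, fact 1, intro allI, rule 2)
qed

lemma has_derivative_open_cong:
  assumes "(f has_derivative D) (at x)" "open U" "x \<in> U" "\<And>y. y \<in> U \<Longrightarrow> f y = g y"
  shows "(g has_derivative D) (at x)"
  using has_derivative_transform_within_open[OF assms(1-3)] assms(4) by blast

inductive sprod :: "'a::real_normed_vector set \<Rightarrow> ('a \<Rightarrow> real) \<Rightarrow> bool" for U where
  sp_base: "smooth_on_open U f \<Longrightarrow> smooth_on_open U g \<Longrightarrow> (\<forall>x\<in>U. h x = f x * g x) \<Longrightarrow> sprod U h"
| sp_add: "sprod U a \<Longrightarrow> sprod U b \<Longrightarrow> (\<forall>x\<in>U. h x = a x + b x) \<Longrightarrow> sprod U h"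

lemma sprod_deriv:
  assumes "sprod U h" "open U"
  shows "\<exists>D. (\<forall>x\<in>U. (h has_derivative D x) (at x)) \<and> (\<forall>v. \<exists>h'. sprod U h' \<and> (\<forall>x\<in>U. D x v = h' x))"
  using assms(1)
proof induction
  case (sp_base f g h)
  let ?D = "\<lambda>x v. f x * frechet_derivative g (at x) v + frechet_derivative f (at x) v * g x"
  have 1: "\<forall>x\<in>U. (h has_derivative ?D x) (at x)"
  proof
    fix x assume x: "x \<in> U"
    have "((\<lambda>x. f x * g x) has_derivative ?D x) (at x)"
      by (rule has_derivative_mult[OF smooth_hasderiv[OF sp_base(1) x] smooth_hasderiv[OF sp_base(2) x]])
    then show "(h has_derivative ?D x) (at x)"
      by (rule has_derivative_open_cong[OF _ assms(2) x]) (use sp_base(3) in auto)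
  qed
  have 2: "\<exists>h'. sprod U h' \<and> (\<forall>x\<in>U. ?D x v = h' x)" for v
  proof -
    have "sprod U (\<lambda>x. f x * frechet_derivative g (at x) v)"
      by (rule sprod.sp_base[OF sp_base(1) smooth_deriv[OF sp_base(2)]]) auto
    moreover have "sprod U (\<lambda>x. frechet_derivative f (at x) v * g x)"
      by (rule sprod.sp_base[OF smooth_deriv[OF sp_base(1)] sp_base(2)]) auto
    ultimately have "sprod U (\<lambda>x. ?D x v)"
      by (rule sp_add) auto
    then show ?thesis by (intro exI[of _ "\<lambda>x. ?D x v"]) auto
  qed
  show ?case by (rule exI[of _ ?D], intro conjI, fact 1, intro allI, rule 2)
next
  case (sp_add a b h)
  obtain Da where Da: "\<forall>x\<in>U. (a has_derivative Da x) (at x)" "\<forall>v. \<exists>h'. sprod U h' \<and> (\<forall>x\<in>U. Da x v = h' x)"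
    using sp_add(4) by blast
  obtain Db where Db: "\<forall>x\<in>U. (b has_derivative Db x) (at x)" "\<forall>v. \<exists>h'. sprod U h' \<and> (\<forall>x\<in>U. Db x v = h' x)"
    using sp_add(5) by blast
  let ?D = "\<lambda>x v. Da x v + Db x v"
  have 1: "\<forall>x\<in>U. (h has_derivative ?D x) (at x)"
  proof
    fix x assume x: "x \<in> U"
    have "((\<lambda>x. a x + b x) has_derivative ?D x) (at x)"
      using has_derivative_add Da(1) Db(1) x by blast
    then show "(h has_derivative ?D x) (at x)"
      by (rule has_derivative_open_cong[OF _ assms(2) x]) (use sp_add(3) in auto)
  qed
  have 2: "\<exists>h'. sprod U h' \<and> (\<forall>x\<in>U. ?D x v = h' x)" for v
  proof -
    obtain ha where ha: "sprod U ha" "\<forall>x\<in>U. Da x v = ha x" using Da(2) by blast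
    obtain hb where hb: "sprod U hb" "\<forall>x\<in>U. Db x v = hb x" using Db(2) by blast
    have "sprod U (\<lambda>x. ha x + hb x)" by (rule sprod.sp_add[OF ha(1) hb(1)]) auto
    then show ?thesis using ha(2) hb(2) by (intro exI[of _ "\<lambda>x. ha x + hb x"]) auto
  qed
  show ?case by (rule exI[of _ ?D], intro conjI, fact 1, intro allI, rule 2)
qed

lemma smooth_mult:
  fixes f g :: "'a::real_normed_vector \<Rightarrow> real"
  assumes "smooth_on_open U f" "smooth_on_open U g"
  shows "smooth_on_open U (\<lambda>x. f x * g x)"
proof (rule smooth_coinduct2[where P="sprod U"])
  show o: "open U" using assms smooth_open by blast
  show "sprod U (\<lambda>x. f x * g x)" by (rule sp_base[OF assms]) auto
  fix h assume "sprod U h" then show "\<exists>D. (\<forall>x\<in>U. (h has_derivative D x) (at x)) \<and> (\<forall>v. \<exists>h'. sprod U h' \<and> (\<forall>x\<in>U. D x v = h' x))"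
    by (rule sprod_deriv[OF _ o])
qed

inductive spow :: "'a::real_normed_vector set \<Rightarrow> ('a \<Rightarrow> real) \<Rightarrow> ('a \<Rightarrow> real) \<Rightarrow> bool" for U f where
  pw_base: "smooth_on_open U a \<Longrightarrow> (\<forall>x\<in>U. h x = a x * f x powr r) \<Longrightarrow> spow U f h"
| pw_add: "spow U f a \<Longrightarrow> spow U f b \<Longrightarrow> (\<forall>x\<in>U. h x = a x + b x) \<Longrightarrow> spow U f h"

lemma spow_deriv:
  assumes "spow U f h" "open U" "smooth_on_open U f" "\<forall>x\<in>U. f x > 0"
  shows "\<exists>D. (\<forall>x\<in>U. (h has_derivative D x) (at x)) \<and> (\<forall>v. \<exists>h'. spow U f h' \<and> (\<forall>x\<in>U. D x v = h' x))"
  using assms(1)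
proof induction
  case (pw_base a h r)
  let ?D = "\<lambda>x v. frechet_derivative a (at x) v * f x powr r + (a x * r * frechet_derivative f (at x) v) * f x powr (r - 1)"
  have 1: "\<forall>x\<in>U. (h has_derivative ?D x) (at x)"
  proof
    fix x assume x: "x \<in> U"
    have fp: "f x > 0" using assms(4) x by blast
    have "((\<lambda>x. f x powr r) has_derivative (\<lambda>v. f x powr r * (0 * ln (f x) + frechet_derivative f (at x) v * r / f x))) (at x)"
      by (rule has_derivative_powr[OF smooth_hasderiv[OF assms(3) x] has_derivative_const fp]) simp
    from has_derivative_mult[OF smooth_hasderiv[OF pw_base(1) x] this]
    have "((\<lambda>x. a x * f x powr r) has_derivative (\<lambda>v. a x * (f x powr r * (0 * ln (f x) + frechet_derivative f (at x) v * r / f x)) + frechet_derivative a (at x) v * f x powr r)) (at x)" .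
    moreover have "(\<lambda>v. a x * (f x powr r * (0 * ln (f x) + frechet_derivative f (at x) v * r / f x)) + frechet_derivative a (at x) v * f x powr r) = ?D x"
      using fp by (auto simp: powr_diff field_simps)
    ultimately have "((\<lambda>x. a x * f x powr r) has_derivative ?D x) (at x)" by simp
    then show "(h has_derivative ?D x) (at x)"
      by (rule has_derivative_open_cong[OF _ assms(2) x]) (use pw_base(2) in auto)
  qed
  have 2: "\<exists>h'. spow U f h' \<and> (\<forall>x\<in>U. ?D x v = h' x)" for v
  proof -
    have "spow U f (\<lambda>x. frechet_derivative a (at x) v * f x powr r)"
      by (rule spow.pw_base[OF smooth_deriv[OF pw_base(1)]]) auto
    moreover have "smooth_on_open U (\<lambda>x. a x * r * frechet_derivative f (at x) v)"
      by (intro smooth_mult pw_base(1) smooth_deriv assms(3) smooth_const assms(2))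
    then have "spow U f (\<lambda>x. (a x * r * frechet_derivative f (at x) v) * f x powr (r - 1))"
      by (rule spow.pw_base) auto
    ultimately have "spow U f (\<lambda>x. ?D x v)"
      by (rule pw_add) auto
    then show ?thesis by (intro exI[of _ "\<lambda>x. ?D x v"]) auto
  qed
  show ?case by (rule exI[of _ ?D], intro conjI, fact 1, intro allI, rule 2)
next
  case (pw_add a b h)
  obtain Da where Da: "\<forall>x\<in>U. (a has_derivative Da x) (at x)" "\<forall>v. \<exists>h'. spow U f h' \<and> (\<forall>x\<in>U. Da x v = h' x)"
    using pw_add(4) by blast
  obtain Db where Db: "\<forall>x\<in>U. (b has_derivative Db x) (at x)" "\<forall>v. \<exists>h'. spow U f h' \<and> (\<forall>x\<in>U. Db x v = h' x)"
    using pw_add(5) by blast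
  let ?D = "\<lambda>x v. Da x v + Db x v"
  have 1: "\<forall>x\<in>U. (h has_derivative ?D x) (at x)"
  proof
    fix x assume x: "x \<in> U"
    have "((\<lambda>x. a x + b x) has_derivative ?D x) (at x)"
      using has_derivative_add Da(1) Db(1) x by blast
    then show "(h has_derivative ?D x) (at x)"
      by (rule has_derivative_open_cong[OF _ assms(2) x]) (use pw_add(3) in auto)
  qed
  have 2: "\<exists>h'. spow U f h' \<and> (\<forall>x\<in>U. ?D x v = h' x)" for v
  proof -
    obtain ha where ha: "spow U f ha" "\<forall>x\<in>U. Da x v = ha x" using Da(2) by blast
    obtain hb where hb: "spow U f hb" "\<forall>x\<in>U. Db x v = hb x" using Db(2) by blast
    have "spow U f (\<lambda>x. ha x + hb x)" by (rule spow.pw_add[OF ha(1) hb(1)]) auto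
    then show ?thesis using ha(2) hb(2) by (intro exI[of _ "\<lambda>x. ha x + hb x"]) auto
  qed
  show ?case by (rule exI[of _ ?D], intro conjI, fact 1, intro allI, rule 2)
qed

lemma smooth_powr:
  fixes f :: "'a::real_normed_vector \<Rightarrow> real"
  assumes "smooth_on_open U f" "\<forall>x\<in>U. f x > 0"
  shows "smooth_on_open U (\<lambda>x. f x powr r)"
proof (rule smooth_coinduct2[where P="spow U f"])
  show o: "open U" using assms smooth_open by blast
  show "spow U f (\<lambda>x. f x powr r)" by (rule pw_base[OF smooth_const[OF o, of 1]]) auto
  fix h assume "spow U f h" then show "\<exists>D. (\<forall>x\<in>U. (h has_derivative D x) (at x)) \<and> (\<forall>v. \<exists>h'. spow U f h' \<and> (\<forall>x\<in>U. D x v = h' x))"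
    by (rule spow_deriv[OF _ o assms])
qed

lemma smooth_sum:
  fixes f :: "'i \<Rightarrow> 'a::real_normed_vector \<Rightarrow> 'b::real_normed_vector"
  assumes "finite S" "open U" "\<And>i. i \<in> S \<Longrightarrow> smooth_on_open U (f i)"
  shows "smooth_on_open U (\<lambda>x. \<Sum>i\<in>S. f i x)"
  using assms(1,3)
proof induction
  case empty
  then show ?case using smooth_const[OF assms(2)] by simp
next
  case (insert i S)
  then show ?case using smooth_add[of U "f i" "\<lambda>x. \<Sum>i\<in>S. f i x"] by simp
qed

lemma smooth_component:
  fixes f :: "'a::real_normed_vector \<Rightarrow> 'b::real_inner"
  shows "smooth_on_open U f \<Longrightarrow> smooth_on_open U (\<lambda>x. f x \<bullet> i)"
  by (rule smooth_bl_comp[of U f "\<lambda>y. y \<bullet> i"]) (auto intro: bounded_linear_inner_left)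

lemma smooth_from_components:
  fixes f :: "'a::real_normed_vector \<Rightarrow> 'b::euclidean_space"
  assumes "open U" "\<And>i. i \<in> Basis \<Longrightarrow> smooth_on_open U (\<lambda>x. f x \<bullet> i)"
  shows "smooth_on_open U f"
proof -
  have "smooth_on_open U (\<lambda>x. \<Sum>i\<in>Basis. (f x \<bullet> i) *\<^sub>R i)"
    by (intro smooth_sum assms(1) finite_Basis smooth_bl_comp[OF assms(2)] bounded_linear_scaleR_left)
  then show ?thesis by (simp add: euclidean_representation)
qed

lemma smooth_scaleR:
  fixes f :: "'a::real_normed_vector \<Rightarrow> 'b::euclidean_space" and h :: "'a \<Rightarrow> real"
  assumes "smooth_on_open U h" "smooth_on_open U f"
  shows "smooth_on_open U (\<lambda>x. h x *\<^sub>R f x)"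
  by (rule smooth_from_components) (use assms smooth_open in \<open>auto intro!: smooth_mult smooth_component\<close>)

lemma smooth_inner:
  fixes f g :: "'a::real_normed_vector \<Rightarrow> 'b::euclidean_space"
  assumes "smooth_on_open U f" "smooth_on_open U g"
  shows "smooth_on_open U (\<lambda>x. f x \<bullet> g x)"
proof -
  have "smooth_on_open U (\<lambda>x. \<Sum>i\<in>Basis. (f x \<bullet> i) * (g x \<bullet> i))"
    by (intro smooth_sum finite_Basis smooth_mult smooth_component assms) (use assms smooth_open in auto)
  then show ?thesis by (rule smooth_cong) (rule euclidean_inner[symmetric])
qed

lemma smooth_minus:
  fixes f :: "'a::real_normed_vector \<Rightarrow> 'b::real_normed_vector"
  shows "smooth_on_open U f \<Longrightarrow> smooth_on_open U (\<lambda>x. - f x)"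
  by (rule smooth_bl_comp[of U f "\<lambda>y. - y"]) (auto intro: bounded_linear_minus bounded_linear_ident)

lemma smooth_diff':
  fixes f g :: "'a::real_normed_vector \<Rightarrow> 'b::real_normed_vector"
  shows "smooth_on_open U f \<Longrightarrow> smooth_on_open U g \<Longrightarrow> smooth_on_open U (\<lambda>x. f x - g x)"
  using smooth_add[OF _ smooth_minus, of U f g] by simp

lemma smooth_divide:
  fixes f g :: "'a::real_normed_vector \<Rightarrow> real"
  assumes "smooth_on_open U f" "smooth_on_open U g" "\<forall>x\<in>U. g x \<noteq> 0"
  shows "smooth_on_open U (\<lambda>x. f x / g x)"
proof -
  have "smooth_on_open U (\<lambda>x. (g x * g x) powr (-1))"
    by (rule smooth_powr) (use assms in \<open>auto intro: smooth_mult simp: zero_less_mult_iff\<close>)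
  then have "smooth_on_open U (\<lambda>x. (f x * g x) * (g x * g x) powr (-1))"
    by (intro smooth_mult assms)
  then show ?thesis
    by (rule smooth_cong) (use assms(3) in \<open>auto simp: powr_minus_divide\<close>)
qed

lemma smooth_sqrt:
  fixes f :: "'a::real_normed_vector \<Rightarrow> real"
  assumes "smooth_on_open U f" "\<forall>x\<in>U. f x > 0"
  shows "smooth_on_open U (\<lambda>x. sqrt (f x))"
  using smooth_powr[OF assms, of "1/2"]
  by (rule smooth_cong) (use assms(2) in \<open>auto simp: powr_half_sqrt\<close>)

lemma zero_near:
  fixes g :: "'a::real_normed_vector \<Rightarrow> real"
  assumes G: "(g has_derivative G) (at x)" and gx: "g x = 0" and U: "open U" "x \<in> U"
    and cont: "continuous_on U g" and Gv: "G v = 0" and Gn: "G n > 0" and k: "k > 0"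
  shows "\<exists>\<delta>>0. \<forall>t. \<bar>t\<bar> < \<delta> \<longrightarrow> (\<exists>s. \<bar>s\<bar> \<le> k * \<bar>t\<bar> \<and> x + t *\<^sub>R v + s *\<^sub>R n \<in> U \<and> g (x + t *\<^sub>R v + s *\<^sub>R n) = 0)"
proof -
  have lin: "linear G" using G has_derivative_linear by blast
  obtain r where r: "r > 0" "ball x r \<subseteq> U" using U open_contains_ball by blast
  define a where "a = G n"
  have a: "a > 0" using Gn a_def by simp
  have n0: "n \<noteq> 0" using Gn linear_0[OF lin] by auto
  define c where "c = norm v + k * norm n"
  have c: "c > 0" using n0 k unfolding c_def by (simp add: add_nonneg_pos)
  define \<eta> where "\<eta> = k * a / (2 * c)"
  have \<eta>: "\<eta> > 0" using k a c unfolding \<eta>_def by simp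
  obtain \<rho> where \<rho>: "\<rho> > 0" "\<And>y. norm (y - x) < \<rho> \<Longrightarrow> norm (g y - g x - G (y - x)) \<le> \<eta> * norm (y - x)"
    using G \<eta> unfolding has_derivative_at_alt by blast
  define \<delta> where "\<delta> = min \<rho> r / c"
  have \<delta>: "\<delta> > 0" using \<rho> r c unfolding \<delta>_def by simp
  show ?thesis
  proof (rule exI[of _ \<delta>], rule conjI[OF \<delta>], intro allI impI)
    fix t :: real assume t: "\<bar>t\<bar> < \<delta>"
    show "\<exists>s. \<bar>s\<bar> \<le> k * \<bar>t\<bar> \<and> x + t *\<^sub>R v + s *\<^sub>R n \<in> U \<and> g (x + t *\<^sub>R v + s *\<^sub>R n) = 0"
    proof (cases "t = 0")
      case True
      then show ?thesis using U gx by (intro exI[of _ 0]) auto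
    next
      case False
      define m where "m = k * \<bar>t\<bar>"
      have m: "m > 0" using False k unfolding m_def by simp
      define \<phi> where "\<phi> s = g (x + t *\<^sub>R v + s *\<^sub>R n)" for s
      have small: "norm (t *\<^sub>R v + s *\<^sub>R n) < min \<rho> r" if "\<bar>s\<bar> \<le> m" for s
      proof -
        have "norm (t *\<^sub>R v + s *\<^sub>R n) \<le> \<bar>t\<bar> * norm v + \<bar>s\<bar> * norm n"
          using norm_triangle_ineq[of "t *\<^sub>R v" "s *\<^sub>R n"] by simp
        also have "\<dots> \<le> \<bar>t\<bar> * norm v + m * norm n"
          using that by (simp add: mult_right_mono)
        also have "\<dots> = \<bar>t\<bar> * c" unfolding m_def c_def by (simp add: algebra_simps)
        also have "\<dots> < \<delta> * c" using t c by simp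
        also have "\<dots> = min \<rho> r" unfolding \<delta>_def using c by simp
        finally show ?thesis .
      qed
      have inU: "x + t *\<^sub>R v + s *\<^sub>R n \<in> U" if "\<bar>s\<bar> \<le> m" for s
      proof -
        have "dist x (x + t *\<^sub>R v + s *\<^sub>R n) < r" using small[OF that] norm_minus_cancel[of "t *\<^sub>R v + s *\<^sub>R n"] by (simp add: dist_norm)
        then show ?thesis using r by auto
      qed
      have est: "\<bar>\<phi> s - s * a\<bar> \<le> \<eta> * (\<bar>t\<bar> * c)" if "\<bar>s\<bar> \<le> m" for s
      proof -
        have "norm (\<phi> s - g x - G (t *\<^sub>R v + s *\<^sub>R n)) \<le> \<eta> * norm (t *\<^sub>R v + s *\<^sub>R n)"
          using \<rho>(2)[of "x + t *\<^sub>R v + s *\<^sub>R n"] small[OF that] unfolding \<phi>_def by (simp add: add.assoc)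
        moreover have "G (t *\<^sub>R v + s *\<^sub>R n) = s * a"
          using lin Gv unfolding a_def by (simp add: linear_add linear_scale)
        moreover have "norm (t *\<^sub>R v + s *\<^sub>R n) \<le> \<bar>t\<bar> * c"
        proof -
          have "norm (t *\<^sub>R v + s *\<^sub>R n) \<le> \<bar>t\<bar> * norm v + \<bar>s\<bar> * norm n"
            using norm_triangle_ineq[of "t *\<^sub>R v" "s *\<^sub>R n"] by simp
          also have "\<dots> \<le> \<bar>t\<bar> * norm v + m * norm n"
            using that by (simp add: mult_right_mono)
          also have "\<dots> = \<bar>t\<bar> * c" unfolding m_def c_def by (simp add: algebra_simps)
          finally show ?thesis .
        qed
        ultimately show ?thesis using gx \<eta>
          by (smt (verit, best) mult_left_mono real_norm_def)
      qed
      have ec: "\<eta> * (\<bar>t\<bar> * c) = m * a / 2"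
        unfolding \<eta>_def m_def using c by (simp add: field_simps)
      have p1: "\<phi> m \<ge> 0" using est[of m] m ec a by (simp add: abs_le_iff) (smt (verit) mult_pos_pos)
      have p2: "\<phi> (-m) \<le> 0" using est[of "-m"] m ec a by (simp add: abs_le_iff) (smt (verit) mult_pos_pos)
      have cont\<phi>: "continuous_on {-m..m} \<phi>"
        unfolding \<phi>_def
        by (rule continuous_on_compose2[OF cont]) (auto intro!: continuous_intros inU)
      obtain s where s: "-m \<le> s" "s \<le> m" "\<phi> s = 0"
        using IVT'[of \<phi> "-m" 0 m, OF p2 p1 _ cont\<phi>] m by auto
      then show ?thesis using inU[of s] unfolding \<phi>_def m_def by (intro exI[of _ s]) auto
    qed
  qed
qed

lemma tangent_space_char:
  fixes g :: "'a::euclidean_space \<Rightarrow> real"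
  assumes U: "open U" "x \<in> U" and X: "X \<inter> U = {y\<in>U. g y = 0}" "x \<in> X"
    and G: "(g has_derivative G) (at x)" and cont: "continuous_on U g" and G0: "G \<noteq> (\<lambda>v. 0)"
  shows "tangent_space X x = {v. G v = 0}"
proof (intro set_eqI iffI)
  have gx: "g x = 0" using X U(2) by blast
  have lin: "linear G" using G has_derivative_linear by blast
  fix v assume "v \<in> tangent_space X x"
  then obtain \<gamma> \<epsilon> where \<gamma>: "\<epsilon> > 0" "\<And>t. \<bar>t\<bar> < \<epsilon> \<Longrightarrow> \<gamma> t \<in> X" "\<gamma> 0 = x"
    "(\<gamma> has_vector_derivative v) (at 0)"
    unfolding tangent_space_def by blast
  have d\<gamma>: "(\<gamma> has_derivative (\<lambda>t. t *\<^sub>R v)) (at 0)"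
    using \<gamma>(4) unfolding has_vector_derivative_def .
  then have "isCont \<gamma> 0" using has_derivative_continuous by blast
  obtain r where r: "r > 0" "ball x r \<subseteq> U" using U open_contains_ball by blast
  obtain d where d: "d > 0" "\<And>t. dist t 0 < d \<Longrightarrow> dist (\<gamma> t) (\<gamma> 0) < r"
    using \<open>isCont \<gamma> 0\<close> r(1) unfolding continuous_at_eps_delta by blast
  have zero: "g (\<gamma> t) = 0" if "t \<in> ball 0 (min d \<epsilon>)" for t
  proof -
    have "\<gamma> t \<in> X" using \<gamma>(2) that by (simp add: dist_norm)
    moreover have "\<gamma> t \<in> U" using d(2)[of t] that r \<gamma>(3) by (auto simp: dist_commute)
    ultimately show ?thesis using X(1) by blast
  qed
  have h1: "((\<lambda>t. g (\<gamma> t)) has_derivative (\<lambda>t. G (t *\<^sub>R v))) (at 0)"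
    using diff_chain_at[OF d\<gamma>, of g G] G \<gamma>(3) by (simp add: comp_def)
  have h2: "((\<lambda>t. g (\<gamma> t)) has_derivative (\<lambda>t. 0)) (at 0)"
    by (rule has_derivative_transform_within_open[where f="\<lambda>t::real. 0::real" and s="ball 0 (min d \<epsilon>)"])
       (use d \<gamma>(1) zero in auto)
  have "(\<lambda>t. G (t *\<^sub>R v)) = (\<lambda>t. 0)" using has_derivative_unique[OF h1 h2] .
  then have "G (1 *\<^sub>R v) = 0" using fun_cong[of "\<lambda>t. G (t *\<^sub>R v)" "\<lambda>t. 0" 1] by simp
  then show "v \<in> {v. G v = 0}" by simp
next
  have gx: "g x = 0" using X U(2) by blast
  have lin: "linear G" using G has_derivative_linear by blast
  fix v assume "v \<in> {v. G v = 0}"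
  then have Gv: "G v = 0" by simp
  obtain w where w: "G w \<noteq> 0" using G0 by auto
  define n where "n = (if G w > 0 then w else - w)"
  have Gn: "G n > 0" using w lin unfolding n_def by (auto simp: linear_neg)
  have n0: "n \<noteq> 0" using Gn linear_0[OF lin] by auto
  obtain \<delta>1 where \<delta>1: "\<delta>1 > 0" "\<And>t. \<bar>t\<bar> < \<delta>1 \<Longrightarrow> \<exists>s. \<bar>s\<bar> \<le> 1 * \<bar>t\<bar> \<and> x + t *\<^sub>R v + s *\<^sub>R n \<in> U \<and> g (x + t *\<^sub>R v + s *\<^sub>R n) = 0"
    using zero_near[OF G gx U cont Gv Gn, of 1] by auto
  define Zs where "Zs t = {s. x + t *\<^sub>R v + s *\<^sub>R n \<in> U \<and> g (x + t *\<^sub>R v + s *\<^sub>R n) = 0}" for t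
  define \<phi> where "\<phi> t = Inf (abs ` Zs t)" for t
  define S where "S t = (if t = 0 then 0 else (SOME s. s \<in> Zs t \<and> \<bar>s\<bar> < \<phi> t + t\<^sup>2))" for t
  have bdd: "bdd_below (abs ` Zs t)" for t by (rule bdd_belowI[of _ 0]) auto
  have S_prop: "S t \<in> Zs t \<and> (t \<noteq> 0 \<longrightarrow> \<bar>S t\<bar> < \<phi> t + t\<^sup>2)" if t: "\<bar>t\<bar> < \<delta>1" for t
  proof (cases "t = 0")
    case True
    then show ?thesis using U gx unfolding S_def Zs_def by simp
  next
    case False
    have ne: "abs ` Zs t \<noteq> {}" using \<delta>1(2)[OF t] unfolding Zs_def by blast
    have "\<phi> t < \<phi> t + t\<^sup>2" using False by simp
    then obtain y where "y \<in> abs ` Zs t" "y < \<phi> t + t\<^sup>2"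
      using cInf_lessD[OF ne] unfolding \<phi>_def by blast
    then have ex: "\<exists>s. s \<in> Zs t \<and> \<bar>s\<bar> < \<phi> t + t\<^sup>2" by blast
    show ?thesis using someI_ex[OF ex] False unfolding S_def by simp
  qed
  have S_small: "\<exists>d>0. \<forall>t. \<bar>t\<bar> < d \<longrightarrow> \<bar>S t\<bar> \<le> 2 * k * \<bar>t\<bar>" if k: "k > 0" for k
  proof -
    obtain \<delta>k where \<delta>k: "\<delta>k > 0" "\<And>t. \<bar>t\<bar> < \<delta>k \<Longrightarrow> \<exists>s. \<bar>s\<bar> \<le> k * \<bar>t\<bar> \<and> x + t *\<^sub>R v + s *\<^sub>R n \<in> U \<and> g (x + t *\<^sub>R v + s *\<^sub>R n) = 0"
      using zero_near[OF G gx U cont Gv Gn k] by auto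
    show ?thesis
    proof (rule exI[of _ "min (min \<delta>1 \<delta>k) k"], rule conjI, use \<delta>1 \<delta>k k in simp, intro allI impI)
      fix t :: real assume t: "\<bar>t\<bar> < min (min \<delta>1 \<delta>k) k"
      show "\<bar>S t\<bar> \<le> 2 * k * \<bar>t\<bar>"
      proof (cases "t = 0")
        case True then show ?thesis unfolding S_def by simp
      next
        case False
        obtain s0 where s0: "\<bar>s0\<bar> \<le> k * \<bar>t\<bar>" "s0 \<in> Zs t" using \<delta>k(2)[of t] t unfolding Zs_def by auto
        have "\<phi> t \<le> \<bar>s0\<bar>" unfolding \<phi>_def using s0(2) bdd by (intro cInf_lower) auto
        moreover have "\<bar>S t\<bar> < \<phi> t + t\<^sup>2" using S_prop[of t] t False by auto
        moreover have "t\<^sup>2 \<le> k * \<bar>t\<bar>"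
        proof -
          have tk: "\<bar>t\<bar> \<le> k" using t by simp
          have "t\<^sup>2 = \<bar>t\<bar> * \<bar>t\<bar>" by (simp add: power2_eq_square)
          then show ?thesis using mult_right_mono[OF tk abs_ge_zero[of t]] by simp
        qed
        ultimately show ?thesis using s0(1) by linarith
      qed
    qed
  qed
  define \<gamma> where "\<gamma> t = x + t *\<^sub>R v + S t *\<^sub>R n" for t
  have inX: "\<gamma> t \<in> X" if "\<bar>t\<bar> < \<delta>1" for t
    using S_prop[OF that] X(1) unfolding Zs_def \<gamma>_def by blast
  have g0: "\<gamma> 0 = x" unfolding \<gamma>_def S_def by simp
  have "(\<gamma> has_derivative (\<lambda>t. t *\<^sub>R v)) (at 0)"
    unfolding has_derivative_at_alt
  proof (intro conjI allI impI bounded_linear_scaleR_left)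
    fix e :: real assume e: "e > 0"
    define k where "k = e / (2 * norm n)"
    have k: "k > 0" using e n0 unfolding k_def by simp
    obtain d where d: "d > 0" "\<And>t. \<bar>t\<bar> < d \<Longrightarrow> \<bar>S t\<bar> \<le> 2 * k * \<bar>t\<bar>" using S_small[OF k] by blast
    show "\<exists>d>0. \<forall>y. norm (y - 0) < d \<longrightarrow> norm (\<gamma> y - \<gamma> 0 - (y - 0) *\<^sub>R v) \<le> e * norm (y - 0)"
    proof (rule exI[of _ d], rule conjI[OF d(1)], intro allI impI)
      fix y :: real assume y: "norm (y - 0) < d"
      have "norm (\<gamma> y - \<gamma> 0 - (y - 0) *\<^sub>R v) = \<bar>S y\<bar> * norm n"
        unfolding \<gamma>_def g0[unfolded \<gamma>_def] by simp
      also have "\<dots> \<le> 2 * k * \<bar>y\<bar> * norm n" using d(2)[of y] y by (simp add: mult_right_mono)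
      also have "\<dots> = e * norm (y - 0)" unfolding k_def using n0 by simp
      finally show "norm (\<gamma> y - \<gamma> 0 - (y - 0) *\<^sub>R v) \<le> e * norm (y - 0)" .
    qed
  qed
  then have "(\<gamma> has_vector_derivative v) (at 0)" unfolding has_vector_derivative_def .
  then show "v \<in> tangent_space X x"
    unfolding tangent_space_def using \<delta>1(1) inX g0 by (intro CollectI exI[of _ \<gamma>] exI[of _ \<delta>1]) auto
qed

locale geo =
  fixes M :: "'a::euclidean_space \<Rightarrow> 'a" and Mi :: "'a \<Rightarrow> 'a" and r2 :: real and p n :: 'a
  assumes M_lin: "linear M" and M_sym: "\<And>u v. M u \<bullet> v = M v \<bullet> u"
    and M_pos: "\<And>u. u \<noteq> 0 \<Longrightarrow> M u \<bullet> u > 0"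
    and Mi1: "\<And>y. M (Mi y) = y" and Mi2: "\<And>u. Mi (M u) = u"
    and r2: "r2 > 0" and n0: "n \<noteq> 0"
    and outside: "\<And>v. n \<bullet> v = 0 \<Longrightarrow> M (p + v) \<bullet> (p + v) > r2"
begin

definition "np = n \<bullet> p"
definition "A w = w - ((w \<bullet> p) / np) *\<^sub>R n"
definition "a w = Mi (A w)"
definition "b = (r2 / np) *\<^sub>R Mi n"
definition "\<alpha> w = M (a w) \<bullet> a w"
definition "\<beta> w = A w \<bullet> b"
definition "\<gamma> = M b \<bullet> b - r2"
definition "disc w = (\<beta> w)\<^sup>2 - \<alpha> w * \<gamma>"
definition "s w = (- \<beta> w + sqrt (disc w)) / \<alpha> w"
definition "u w = s w *\<^sub>R a w + b"
definition "P y = y - ((y \<bullet> n) / (n \<bullet> n)) *\<^sub>R n"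

lemma M_add: "M (x + y) = M x + M y" using M_lin by (simp add: linear_add)
lemma M_scale: "M (c *\<^sub>R x) = c *\<^sub>R M x" using M_lin by (simp add: linear_scale)
lemma M_0: "M 0 = 0" using M_lin by (simp add: linear_0)

lemma quad_expand: "M (c *\<^sub>R x + y) \<bullet> (c *\<^sub>R x + y) = c\<^sup>2 * (M x \<bullet> x) + 2 * c * (M x \<bullet> y) + M y \<bullet> y"
proof -
  have "M (c *\<^sub>R x + y) \<bullet> (c *\<^sub>R x + y) = c * c * (M x \<bullet> x) + c * (M x \<bullet> y) + c * (M y \<bullet> x) + M y \<bullet> y"
    by (simp add: M_add M_scale inner_add_left inner_add_right algebra_simps)
  also have "M y \<bullet> x = M x \<bullet> y" by (rule M_sym)
  finally show ?thesis by (simp add: power2_eq_square algebra_simps)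
qed

lemma np_nz: "np \<noteq> 0"
proof
  assume "np = 0"
  then have "n \<bullet> (- p) = 0" unfolding np_def by simp
  from outside[OF this] show False using r2 M_0 by simp
qed

lemma Mb: "M b = (r2 / np) *\<^sub>R n"
  unfolding b_def by (simp add: M_scale Mi1)

lemma Ma: "M (a w) = A w"
  unfolding a_def by (simp add: Mi1)

lemma b_nz: "b \<noteq> 0"
proof
  assume "b = 0"
  then have "(r2 / np) *\<^sub>R n = 0" using Mb M_0 by simp
  then show False using r2 np_nz n0 by simp
qed

lemma gamma_neg: "\<gamma> < 0"
proof -
  define qb where "qb = M b \<bullet> b"
  have qb: "qb > 0" unfolding qb_def using M_pos b_nz by blast
  have nb: "qb = (r2 / np) * (n \<bullet> b)" unfolding qb_def Mb by simp
  define c' where "c' = (r2 / qb) *\<^sub>R b"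
  have "n \<bullet> c' = np"
    unfolding c'_def using nb qb r2 np_nz by (simp add: field_simps)
  then have "n \<bullet> (c' - p) = 0" unfolding np_def by (simp add: inner_diff_right)
  from outside[OF this] have "M c' \<bullet> c' > r2" by simp
  moreover have "M c' \<bullet> c' = r2 * r2 / qb"
    unfolding c'_def using qb by (simp add: M_scale qb_def[symmetric] power2_eq_square field_simps)
  ultimately have "r2 * r2 / qb > r2" by simp
  then have "r2 * r2 > r2 * qb" using qb by (simp add: field_simps)
  then have "qb < r2" using r2 by simp
  then show ?thesis unfolding \<gamma>_def qb_def by simp
qed

lemma Pn: "n \<bullet> P y = 0"
  unfolding P_def using n0 by (simp add: inner_diff_right inner_commute)

lemma P_add: "P (x + y) = P x + P y" unfolding P_def by (simp add: inner_add_left scaleR_add_left algebra_simps add_divide_distrib)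
lemma P_scale: "P (c *\<^sub>R x) = c *\<^sub>R P x" unfolding P_def by (simp add: algebra_simps)
lemma P_n: "P n = 0" unfolding P_def using n0 by simp
lemma P_orth: "n \<bullet> y = 0 \<Longrightarrow> P y = y" unfolding P_def by (simp add: inner_commute)

lemma A_p: "A w \<bullet> p = 0"
  unfolding A_def inner_diff_left inner_scaleR_left np_def[symmetric] using np_nz by simp

lemma P_diff: "P (x - y) = P x - P y" unfolding P_def by (simp add: inner_diff_left algebra_simps diff_divide_distrib)

lemma PA: "n \<bullet> w = 0 \<Longrightarrow> P (A w) = w"
  unfolding A_def by (simp add: P_diff P_scale P_orth P_n)
lemma A_nz: "n \<bullet> w = 0 \<Longrightarrow> w \<noteq> 0 \<Longrightarrow> A w \<noteq> 0"
proof
  assume h: "n \<bullet> w = 0" "w \<noteq> 0" "A w = 0"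
  have "A w \<bullet> w = w \<bullet> w" unfolding A_def using h(1) by (simp add: inner_diff_left)
  then show False using h by simp
qed

lemma alpha_pos: "n \<bullet> w = 0 \<Longrightarrow> w \<noteq> 0 \<Longrightarrow> \<alpha> w > 0"
proof -
  assume h: "n \<bullet> w = 0" "w \<noteq> 0"
  have "a w \<noteq> 0" using A_nz[OF h] Ma[of w] M_0 by auto
  then show ?thesis unfolding \<alpha>_def using M_pos by blast
qed

lemma quad_u: "M (c *\<^sub>R a w + b) \<bullet> (c *\<^sub>R a w + b) = c\<^sup>2 * \<alpha> w + 2 * c * \<beta> w + \<gamma> + r2"
  unfolding quad_expand \<alpha>_def \<beta>_def \<gamma>_def Ma by simp

lemma s_props:
  assumes "\<alpha> w > 0"
  shows "s w > 0" "\<alpha> w * (s w)\<^sup>2 + 2 * s w * \<beta> w + \<gamma> = 0"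
proof -
  have dp: "disc w > (\<beta> w)\<^sup>2" unfolding disc_def using assms gamma_neg by (simp add: mult_pos_neg)
  then have "sqrt (disc w) > sqrt ((\<beta> w)\<^sup>2)" by (rule real_sqrt_less_mono)
  then have sq: "sqrt (disc w) > \<bar>\<beta> w\<bar>" by simp
  have e: "\<alpha> w * s w + \<beta> w = sqrt (disc w)" unfolding s_def using assms by simp
  have "- \<beta> w + sqrt (disc w) > 0" using sq by linarith
  then show "s w > 0" unfolding s_def using assms by simp
  have d0: "disc w \<ge> 0" using dp zero_le_power2[of "\<beta> w"] by linarith
  have "(sqrt (disc w))\<^sup>2 = disc w" using d0 by simp
  then have h: "(\<alpha> w * s w + \<beta> w)\<^sup>2 = (\<beta> w)\<^sup>2 - \<alpha> w * \<gamma>" unfolding e disc_def by simp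
  have "(\<alpha> w * s w + \<beta> w)\<^sup>2 = \<alpha> w * (\<alpha> w * (s w)\<^sup>2 + 2 * s w * \<beta> w) + (\<beta> w)\<^sup>2"
    by (simp add: power2_eq_square algebra_simps)
  with h have "\<alpha> w * (\<alpha> w * (s w)\<^sup>2 + 2 * s w * \<beta> w + \<gamma>) = 0"
    by (simp add: algebra_simps)
  then show "\<alpha> w * (s w)\<^sup>2 + 2 * s w * \<beta> w + \<gamma> = 0" using assms by simp
qed

lemma root_unique:
  assumes "\<alpha> w > 0" "c > 0" "\<alpha> w * c\<^sup>2 + 2 * c * \<beta> w + \<gamma> = 0"
  shows "c = s w"
proof -
  have dp: "disc w > (\<beta> w)\<^sup>2" unfolding disc_def using assms gamma_neg by (simp add: mult_pos_neg)
  have "(\<alpha> w * c + \<beta> w)\<^sup>2 = \<alpha> w * (\<alpha> w * c\<^sup>2 + 2 * c * \<beta> w) + (\<beta> w)\<^sup>2"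
    by (simp add: power2_eq_square algebra_simps)
  also have "\<alpha> w * c\<^sup>2 + 2 * c * \<beta> w = - \<gamma>" using assms(3) by simp
  finally have sq: "(\<alpha> w * c + \<beta> w)\<^sup>2 = disc w" unfolding disc_def by simp
  have pos: "\<alpha> w * c + \<beta> w > 0"
  proof (rule ccontr)
    assume "\<not> ?thesis"
    then have X0: "\<alpha> w * c + \<beta> w \<le> 0" by simp
    have "\<alpha> w * c > 0" using assms by simp
    then have lt: "- (\<alpha> w * c + \<beta> w) < - \<beta> w" by simp
    have nn: "0 \<le> - (\<alpha> w * c + \<beta> w)" using X0 by simp
    have "(- (\<alpha> w * c + \<beta> w))\<^sup>2 < (- \<beta> w)\<^sup>2" by (rule power_strict_mono[OF lt nn]) (rule zero_less_numeral)
    then have "(\<alpha> w * c + \<beta> w)\<^sup>2 < (\<beta> w)\<^sup>2" by (simp only: power2_minus)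
    then show False using sq dp by simp
  qed
  have "sqrt (disc w) = sqrt ((\<alpha> w * c + \<beta> w)\<^sup>2)" using sq by simp
  also have "\<dots> = \<bar>\<alpha> w * c + \<beta> w\<bar>" by (rule real_sqrt_abs)
  also have "\<dots> = \<alpha> w * c + \<beta> w" using pos by simp
  finally have "sqrt (disc w) = \<alpha> w * c + \<beta> w" .
  then show ?thesis unfolding s_def using assms(1) by (simp add: field_simps)
qed

lemma forward:
  assumes "n \<bullet> w = 0" "w \<noteq> 0"
  shows "s w > 0" "M (u w) \<bullet> u w = r2" "M (u w) \<bullet> (p - u w) = 0" "P (M (u w)) = s w *\<^sub>R w"
proof -
  have al: "\<alpha> w > 0" by (rule alpha_pos[OF assms])
  show "s w > 0" by (rule s_props(1)[OF al])
  show uu: "M (u w) \<bullet> u w = r2" unfolding u_def quad_u using s_props(2)[OF al] by (simp add: algebra_simps)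
  have Mu: "M (u w) = s w *\<^sub>R A w + (r2 / np) *\<^sub>R n"
    unfolding u_def by (simp add: M_add M_scale Ma Mb)
  have "M (u w) \<bullet> p = r2" unfolding Mu using A_p np_nz by (simp add: inner_add_left np_def[symmetric])
  then show "M (u w) \<bullet> (p - u w) = 0" using uu by (simp add: inner_diff_right)
  show "P (M (u w)) = s w *\<^sub>R w" unfolding Mu by (simp add: P_add P_scale P_n PA[OF assms(1)])
qed

lemma P_decomp: "y = P y + ((y \<bullet> n) / (n \<bullet> n)) *\<^sub>R n"
  unfolding P_def by simp

lemma nonzero:
  assumes "M v \<bullet> v = r2" "M v \<bullet> (p - v) = 0"
  shows "P (M v) \<noteq> 0"
proof
  assume P0: "P (M v) = 0"
  define k where "k = (M v \<bullet> n) / (n \<bullet> n)"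
  have Mv: "M v = k *\<^sub>R n" using P_decomp[of "M v"] P0 unfolding k_def by simp
  have vp: "M v \<bullet> p = r2" using assms by (simp add: inner_diff_right)
  then have knp: "k * np = r2" unfolding Mv np_def by simp
  have "k * (n \<bullet> v) = r2" using assms(1) unfolding Mv by simp
  then have "k * (n \<bullet> v) = k * np" using knp by simp
  moreover have "k \<noteq> 0" using knp r2 by auto
  ultimately have "n \<bullet> v = np" by simp
  then have "n \<bullet> (v - p) = 0" unfolding np_def by (simp add: inner_diff_right)
  from outside[OF this] show False using assms(1) by simp
qed

lemma backward:
  assumes uu: "M v \<bullet> v = r2" and up: "M v \<bullet> (p - v) = 0" and t: "t > 0" and w: "w = (2 * t) *\<^sub>R P (M v)"
  shows "n \<bullet> w = 0" "w \<noteq> 0" "s w = 1 / (2 * t)" "u w = v"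
proof -
  show nw: "n \<bullet> w = 0" unfolding w by (simp add: Pn)
  show wn: "w \<noteq> 0" unfolding w using nonzero[OF uu up] t by simp
  define \<sigma> where "\<sigma> = 1 / (2 * t)"
  have \<sigma>: "\<sigma> > 0" unfolding \<sigma>_def using t by simp
  have PM: "P (M v) = \<sigma> *\<^sub>R w" unfolding w \<sigma>_def using t by simp
  define k where "k = (M v \<bullet> n) / (n \<bullet> n)"
  have Mv: "M v = \<sigma> *\<^sub>R w + k *\<^sub>R n" using P_decomp[of "M v"] PM unfolding k_def by simp
  have vp: "M v \<bullet> p = r2" using uu up by (simp add: inner_diff_right)
  then have "\<sigma> * (w \<bullet> p) + k * np = r2" unfolding Mv np_def by (simp add: inner_add_left)
  then have k: "k = (r2 - \<sigma> * (w \<bullet> p)) / np" using np_nz by (simp add: field_simps)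
  have "M v = \<sigma> *\<^sub>R A w + (r2 / np) *\<^sub>R n"
    unfolding Mv A_def k using np_nz by (simp add: algebra_simps diff_divide_distrib scaleR_diff_left)
  also have "\<dots> = M (\<sigma> *\<^sub>R a w + b)" by (simp add: M_add M_scale Ma Mb)
  finally have "Mi (M v) = Mi (M (\<sigma> *\<^sub>R a w + b))" by simp
  then have v: "v = \<sigma> *\<^sub>R a w + b" by (simp add: Mi2)
  have "\<sigma>\<^sup>2 * \<alpha> w + 2 * \<sigma> * \<beta> w + \<gamma> + r2 = r2" using uu unfolding v quad_u .
  then have "\<alpha> w * \<sigma>\<^sup>2 + 2 * \<sigma> * \<beta> w + \<gamma> = 0" by (simp add: algebra_simps)
  from root_unique[OF alpha_pos[OF nw wn] \<sigma> this] have "\<sigma> = s w" .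
  then show "s w = 1 / (2 * t)" unfolding \<sigma>_def by simp
  show "u w = v" unfolding u_def v \<open>\<sigma> = s w\<close> ..
qed

end

definition grad :: "('a::euclidean_space \<Rightarrow> real) \<Rightarrow> 'a \<Rightarrow> 'a" where
  "grad g y = (\<Sum>i\<in>Basis. frechet_derivative g (at y) i *\<^sub>R i)"

definition Pj :: "'a::real_inner \<Rightarrow> 'a \<Rightarrow> 'a" where
  "Pj n y = y - ((y \<bullet> n) / (n \<bullet> n)) *\<^sub>R n"

lemma lin_repr:
  fixes L :: "'a::euclidean_space \<Rightarrow> real"
  assumes lin: "linear L"
  shows "L v = (\<Sum>j\<in>Basis. L j *\<^sub>R j) \<bullet> v"
proof -
  have "L v = L (\<Sum>j\<in>Basis. (v \<bullet> j) *\<^sub>R j)" by (simp add: euclidean_representation)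
  also have "\<dots> = (\<Sum>j\<in>Basis. (v \<bullet> j) * L j)" by (simp add: linear_sum[OF lin] linear_scale[OF lin])
  also have "\<dots> = (\<Sum>j\<in>Basis. L j *\<^sub>R j) \<bullet> v" unfolding inner_sum_left inner_scaleR_left
    by (intro sum.cong refl) (simp add: inner_commute mult.commute)
  finally show ?thesis .
qed

lemma perp_ex:
  fixes n :: "'a::euclidean_space"
  assumes "DIM('a) \<ge> 2"
  shows "\<exists>w. n \<bullet> w = 0 \<and> w \<noteq> 0"
proof -
  obtain i :: 'a where i: "i \<in> Basis" using nonempty_Basis by blast
  have "card (Basis - {i}) \<ge> 1" using assms i by (simp add: card_Diff_singleton)
  then obtain j where j: "j \<in> Basis" "j \<noteq> i" by (metis Diff_iff card_0_eq finite_Basis finite_Diff insertI1 not_one_le_zero ex_in_conv)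
  show ?thesis
  proof (cases "n \<bullet> i = 0")
    case True
    then show ?thesis using i by (intro exI[of _ i]) (auto simp: nonzero_Basis)
  next
    case False
    define w where "w = (n \<bullet> j) *\<^sub>R i - (n \<bullet> i) *\<^sub>R j"
    have "w \<bullet> j = - (n \<bullet> i)" unfolding w_def using i j by (simp add: inner_diff_left inner_Basis)
    then have "w \<noteq> 0" using False by auto
    moreover have "n \<bullet> w = 0" unfolding w_def by (simp add: inner_diff_right algebra_simps)
    ultimately show ?thesis by blast
  qed
qed

lemma outside_lemma:
  fixes M :: "'a::euclidean_space \<Rightarrow> 'a"
  assumes M_lin: "linear M" and M_sym: "\<And>u v. M u \<bullet> v = M v \<bullet> u"
    and M_pos: "\<And>u. u \<noteq> 0 \<Longrightarrow> M u \<bullet> u > 0"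
    and w0: "n \<bullet> w0 = 0" "w0 \<noteq> 0"
    and ne: "\<And>v. n \<bullet> v = 0 \<Longrightarrow> M (p + v) \<bullet> (p + v) \<noteq> r2"
    and v: "n \<bullet> v = 0"
  shows "M (p + v) \<bullet> (p + v) > r2"
proof (rule ccontr)
  assume "\<not> ?thesis"
  then have lt: "M (p + v) \<bullet> (p + v) < r2" using ne[OF v] by simp
  define y where "y = p + v"
  define f where "f s = M (y + s *\<^sub>R w0) \<bullet> (y + s *\<^sub>R w0)" for s
  define c0 where "c0 = M y \<bullet> y"
  define bb where "bb = M y \<bullet> w0"
  define aa where "aa = M w0 \<bullet> w0"
  have aa: "aa > 0" unfolding aa_def using M_pos w0 by blast
  have fexp: "f s = c0 + 2 * s * bb + s * s * aa" for s
  proof -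
    have "f s = M y \<bullet> y + s * (M y \<bullet> w0) + s * (M w0 \<bullet> y) + s * s * (M w0 \<bullet> w0)"
      unfolding f_def using M_lin by (simp add: linear_add linear_scale inner_add_left inner_add_right algebra_simps)
    then show ?thesis unfolding c0_def bb_def aa_def using M_sym[of w0 y] by simp
  qed
  define S where "S = (2 * \<bar>bb\<bar> + \<bar>r2\<bar> + \<bar>c0\<bar> + 1) / aa + 1"
  have S1: "S \<ge> 1" unfolding S_def using aa by simp
  have "S * aa = 2 * \<bar>bb\<bar> + \<bar>r2\<bar> + \<bar>c0\<bar> + 1 + aa" unfolding S_def using aa by (simp add: field_simps)
  then have "2 * bb + S * aa \<ge> \<bar>r2\<bar> + \<bar>c0\<bar> + 1" using aa by linarith
  then have "S * (2 * bb + S * aa) \<ge> 1 * (\<bar>r2\<bar> + \<bar>c0\<bar> + 1)"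
    by (rule mult_mono[OF S1]) (use S1 in auto)
  then have fS: "f S > r2" unfolding fexp by (simp add: algebra_simps)
  have f0: "f 0 < r2" unfolding f_def y_def using lt by simp
  have cont: "continuous_on {0..S} f" unfolding fexp by (intro continuous_intros)
  obtain s where s: "0 \<le> s" "s \<le> S" "f s = r2"
    using IVT'[of f 0 r2 S, OF less_imp_le[OF f0] less_imp_le[OF fS] _ cont] S1 by auto
  have "n \<bullet> (v + s *\<^sub>R w0) = 0" using v w0 by (simp add: inner_add_right)
  from ne[OF this] show False using s(3) unfolding f_def y_def by (simp add: add.assoc)
qed

lemma Pj_scale: "Pj n (k *\<^sub>R m) = k *\<^sub>R Pj n m"
  unfolding Pj_def by (simp add: algebra_simps)

lemma Pj_orth: "n \<bullet> Pj n m = 0"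
  unfolding Pj_def by (cases "n = 0") (simp_all add: inner_diff_right inner_commute)

lemma covector_rep_eq:
  assumes T: "tangent_space X y = {v. n \<bullet> v = 0}" and n0: "n \<noteq> 0" and xi: "\<And>v. \<xi> v = m \<bullet> v"
  shows "covector_rep X y \<xi> = Pj n m"
  unfolding covector_rep_def
proof (rule the_equality)
  show "Pj n m \<in> tangent_space X y \<and> (\<forall>v\<in>tangent_space X y. Pj n m \<bullet> v = \<xi> v)"
    unfolding T xi using Pj_orth[of n m] by (auto simp: Pj_def inner_diff_left inner_diff_right inner_commute)
next
  fix w assume w: "w \<in> tangent_space X y \<and> (\<forall>v\<in>tangent_space X y. w \<bullet> v = \<xi> v)"
  define d where "d = w - Pj n m"
  have dT: "d \<in> tangent_space X y" unfolding d_def T using w Pj_orth[of n m] T by (simp add: inner_diff_right)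
  have "w \<bullet> d = m \<bullet> d" using w dT xi by simp
  moreover have "Pj n m \<bullet> d = m \<bullet> d" using dT unfolding T by (simp add: Pj_def inner_diff_left inner_diff_right inner_commute)
  moreover have "d \<bullet> d = w \<bullet> d - Pj n m \<bullet> d" by (simp only: inner_diff_left[symmetric] d_def[symmetric])
  ultimately have "d \<bullet> d = 0" by simp
  then show "w = Pj n m" unfolding d_def by simp
qed

locale L3 =
  fixes X :: "'a::euclidean_space set" and M Mi :: "'a \<Rightarrow> 'a" and c :: real and e :: 'a
  assumes hyp: "smooth_hypersurface X"
    and M_lin: "linear M" and M_sym: "\<And>u v. M u \<bullet> v = M v \<bullet> u" and M_pos: "\<And>u. u \<noteq> 0 \<Longrightarrow> M u \<bullet> u > 0"
    and Mi1: "\<And>y. M (Mi y) = y" and Mi2: "\<And>u. Mi (M u) = u" and Mi_lin: "linear Mi"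
    and c1: "c < 1" and dim: "DIM('a) \<ge> 2"
    and tang: "\<And>x v s. x \<in> X \<Longrightarrow> v \<in> tangent_space X x \<Longrightarrow> v \<noteq> 0 \<Longrightarrow> c + M (x + s *\<^sub>R v - e) \<bullet> (x + s *\<^sub>R v - e) \<noteq> 1"
begin

definition "r2 = 1 - c"
definition "S = {((x,\<sigma>),t::real). x \<in> X \<and> M (\<sigma> - e) \<bullet> (\<sigma> - e) = r2 \<and> M (\<sigma> - e) \<bullet> (x - \<sigma>) = 0 \<and> t > 0}"
definition "Dm = (\<lambda>((x,\<sigma>),t). (x, covector_rep X x (\<lambda>v. t * (2 * (M (\<sigma> - e) \<bullet> v)))))"

lemma r2_pos: "r2 > 0" unfolding r2_def using c1 by simp

lemma chart: "x \<in> X \<Longrightarrow> \<exists>U (g::'a \<Rightarrow> real). open U \<and> x \<in> U \<and> smooth_on_open U g \<and> X \<inter> U = {y\<in>U. g y = 0} \<and> (\<forall>y\<in>U. frechet_derivative g (at y) \<noteq> (\<lambda>v. 0))"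
  using hyp unfolding smooth_hypersurface_def by blast

lemma chart_tangent:
  assumes U: "open U" and g: "smooth_on_open U g" and XU: "X \<inter> U = {y\<in>U. g y = 0}"
    and nz: "\<forall>y\<in>U. frechet_derivative g (at y) \<noteq> (\<lambda>v. 0)" and y: "y \<in> U" "y \<in> X"
  shows "tangent_space X y = {v. grad g y \<bullet> v = 0}" "grad g y \<noteq> 0"
proof -
  have hd: "(g has_derivative frechet_derivative g (at y)) (at y)" using smooth_hasderiv[OF g y(1)] .
  have lin: "linear (frechet_derivative g (at y))" using has_derivative_linear[OF hd] .
  have rep: "frechet_derivative g (at y) v = grad g y \<bullet> v" for v
    unfolding grad_def by (rule lin_repr[OF lin])
  have cont: "continuous_on U g" using differentiable_imp_continuous_on[OF smooth_diff[OF g]] .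
  have "tangent_space X y = {v. frechet_derivative g (at y) v = 0}"
    by (rule tangent_space_char[OF U y(1) XU y(2) hd cont]) (use nz y(1) in blast)
  then show "tangent_space X y = {v. grad g y \<bullet> v = 0}" by (simp add: rep)
  show "grad g y \<noteq> 0"
  proof
    assume "grad g y = 0"
    then have "frechet_derivative g (at y) = (\<lambda>v. 0)" using rep by (intro ext) simp
    then show False using nz y(1) by blast
  qed
qed

lemma normal: "x \<in> X \<Longrightarrow> \<exists>n. n \<noteq> 0 \<and> tangent_space X x = {v. n \<bullet> v = 0}"
proof -
  assume x: "x \<in> X"
  obtain U and g :: "'a \<Rightarrow> real" where Ug: "open U" "x \<in> U" "smooth_on_open U g" "X \<inter> U = {y\<in>U. g y = 0}" "\<forall>y\<in>U. frechet_derivative g (at y) \<noteq> (\<lambda>v. 0)"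
    using chart[OF x] by blast
  show ?thesis using chart_tangent[OF Ug(1,3,4,5) Ug(2) x] by blast
qed

lemma geo_at:
  assumes x: "x \<in> X" and n0: "n \<noteq> 0" and T: "tangent_space X x = {v. n \<bullet> v = 0}"
  shows "geo M Mi r2 (x - e) n"
proof -
  obtain w0 where w0: "n \<bullet> w0 = 0" "w0 \<noteq> 0" using perp_ex[OF dim] by blast
  have ne: "M ((x - e) + v) \<bullet> ((x - e) + v) \<noteq> r2" if v: "n \<bullet> v = 0" for v
  proof (cases "v = 0")
    case True
    have "w0 \<in> tangent_space X x" using T w0 by simp
    from tang[OF x this w0(2), of 0] show ?thesis using True unfolding r2_def by auto
  next
    case False
    have "v \<in> tangent_space X x" using T v by simp
    from tang[OF x this False, of 1] show ?thesis unfolding r2_def by (auto simp: algebra_simps)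
  qed
  have out: "M ((x - e) + v) \<bullet> ((x - e) + v) > r2" if "n \<bullet> v = 0" for v
    by (rule outside_lemma[OF M_lin M_sym M_pos w0 ne that])
  show ?thesis by (rule geo.intro[OF M_lin M_sym M_pos Mi1 Mi2 r2_pos n0 out])
qed

lemma Dm_eq:
  assumes "tangent_space X x = {v. n \<bullet> v = 0}" "n \<noteq> 0"
  shows "Dm ((x,\<sigma>),t) = (x, (2 * t) *\<^sub>R Pj n (M (\<sigma> - e)))"
proof -
  have "covector_rep X x (\<lambda>v. t * (2 * (M (\<sigma> - e) \<bullet> v))) = Pj n ((2 * t) *\<^sub>R M (\<sigma> - e))"
    by (rule covector_rep_eq[OF assms]) simp
  then show ?thesis unfolding Dm_def by (simp add: Pj_scale)
qed

lemma geoP: "geo M Mi r2 p n \<Longrightarrow> geo.P n y = Pj n y"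
  by (simp add: geo.P_def Pj_def)

lemma first_conj:
  assumes x: "x \<in> X" and uu: "M (\<sigma> - e) \<bullet> (\<sigma> - e) = r2" and up: "M (\<sigma> - e) \<bullet> (x - \<sigma>) = 0"
  shows "\<exists>v\<in>tangent_space X x. 2 * (M (\<sigma> - e) \<bullet> v) \<noteq> 0"
proof -
  obtain n where n: "n \<noteq> 0" "tangent_space X x = {v. n \<bullet> v = 0}" using normal[OF x] by blast
  interpret G: geo M Mi r2 "x - e" n by (rule geo_at[OF x n(1) n(2)])
  define m where "m = M (\<sigma> - e)"
  have "M (\<sigma> - e) \<bullet> ((x - e) - (\<sigma> - e)) = 0" using up by simp
  from G.nonzero[OF uu this] have P0: "Pj n m \<noteq> 0" unfolding m_def geoP[OF G.geo_axioms] .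
  have "m \<bullet> Pj n m = Pj n m \<bullet> Pj n m"
  proof -
    have "m = Pj n m + ((m \<bullet> n) / (n \<bullet> n)) *\<^sub>R n" unfolding Pj_def by simp
    then have "m \<bullet> Pj n m = (Pj n m + ((m \<bullet> n) / (n \<bullet> n)) *\<^sub>R n) \<bullet> Pj n m" by simp
    also have "\<dots> = Pj n m \<bullet> Pj n m" using Pj_orth[of n m] by (simp add: inner_add_left)
    finally show ?thesis .
  qed
  then have "m \<bullet> Pj n m \<noteq> 0" using P0 by simp
  moreover have "Pj n m \<in> tangent_space X x" using n Pj_orth by simp
  ultimately show ?thesis by (intro bexI[of _ "Pj n m"]) (auto simp: m_def)
qed

lemma Dm_maps: "z \<in> S \<Longrightarrow> Dm z \<in> cotangent_bundle_minus_zero X"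
proof -
  assume "z \<in> S"
  then obtain x \<sigma> t where z: "z = ((x,\<sigma>),t)" "x \<in> X" "M (\<sigma> - e) \<bullet> (\<sigma> - e) = r2" "M (\<sigma> - e) \<bullet> (x - \<sigma>) = 0" "t > 0"
    unfolding S_def by blast
  obtain n where n: "n \<noteq> 0" "tangent_space X x = {v. n \<bullet> v = 0}" using normal[OF z(2)] by blast
  interpret G: geo M Mi r2 "x - e" n by (rule geo_at[OF z(2) n(1) n(2)])
  have up: "M (\<sigma> - e) \<bullet> ((x - e) - (\<sigma> - e)) = 0" using z(4) by simp
  have w: "(2 * t) *\<^sub>R Pj n (M (\<sigma> - e)) = (2 * t) *\<^sub>R G.P (M (\<sigma> - e))" by (simp add: geoP[OF G.geo_axioms])
  note bw = G.backward[OF z(3) up z(5) w]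
  show ?thesis unfolding z(1) Dm_eq[OF n(2) n(1)] cotangent_bundle_minus_zero_def
    using bw(1,2) z(2) n(2) by simp
qed

lemma Dm_inj: "inj_on Dm S"
proof (rule inj_onI)
  fix z1 z2 assume "z1 \<in> S" "z2 \<in> S" and eq: "Dm z1 = Dm z2"
  obtain x1 \<sigma>1 t1 where z1: "z1 = ((x1,\<sigma>1),t1)" "x1 \<in> X" "M (\<sigma>1 - e) \<bullet> (\<sigma>1 - e) = r2" "M (\<sigma>1 - e) \<bullet> (x1 - \<sigma>1) = 0" "t1 > 0"
    using \<open>z1 \<in> S\<close> unfolding S_def by blast
  obtain x2 \<sigma>2 t2 where z2: "z2 = ((x2,\<sigma>2),t2)" "x2 \<in> X" "M (\<sigma>2 - e) \<bullet> (\<sigma>2 - e) = r2" "M (\<sigma>2 - e) \<bullet> (x2 - \<sigma>2) = 0" "t2 > 0"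
    using \<open>z2 \<in> S\<close> unfolding S_def by blast
  obtain n where n: "n \<noteq> 0" "tangent_space X x1 = {v. n \<bullet> v = 0}" using normal[OF z1(2)] by blast
  have x12: "x1 = x2" using eq unfolding z1(1) z2(1) Dm_def by simp
  interpret G: geo M Mi r2 "x1 - e" n by (rule geo_at[OF z1(2) n(1) n(2)])
  define w where "w = (2 * t1) *\<^sub>R Pj n (M (\<sigma>1 - e))"
  have w2: "w = (2 * t2) *\<^sub>R Pj n (M (\<sigma>2 - e))"
    using eq unfolding z1(1) z2(1) w_def Dm_eq[OF n(2) n(1)] x12 using Dm_eq[OF n(2)[unfolded x12] n(1)] by simp
  have up1: "M (\<sigma>1 - e) \<bullet> ((x1 - e) - (\<sigma>1 - e)) = 0" using z1(4) by simp
  have up2: "M (\<sigma>2 - e) \<bullet> ((x1 - e) - (\<sigma>2 - e)) = 0" using z2(4) x12 by simp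
  note b1 = G.backward[OF z1(3) up1 z1(5) w_def[unfolded geoP[OF G.geo_axioms, symmetric]]]
  note b2 = G.backward[OF z2(3) up2 z2(5) w2[unfolded geoP[OF G.geo_axioms, symmetric]]]
  have "t1 = t2" using b1(3) b2(3) z1(5) z2(5) by (simp add: field_simps)
  moreover have "\<sigma>1 = \<sigma>2" using b1(4) b2(4) by simp
  ultimately show "z1 = z2" using z1(1) z2(1) x12 by simp
qed

lemma Dm_preimage:
  assumes x: "x \<in> X" and n: "n \<noteq> 0" "tangent_space X x = {v. n \<bullet> v = 0}" and w: "n \<bullet> w = 0" "w \<noteq> 0"
  shows "((x, e + geo.u M Mi r2 (x - e) n w), 1 / (2 * geo.s M Mi r2 (x - e) n w)) \<in> S"
    "Dm ((x, e + geo.u M Mi r2 (x - e) n w), 1 / (2 * geo.s M Mi r2 (x - e) n w)) = (x, w)"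
proof -
  interpret G: geo M Mi r2 "x - e" n by (rule geo_at[OF x n(1) n(2)])
  note fw = G.forward[OF w]
  have up: "M (e + G.u w - e) \<bullet> (x - (e + G.u w)) = 0" using fw(3) by (simp add: algebra_simps)
  show "((x, e + G.u w), 1 / (2 * G.s w)) \<in> S" unfolding S_def using x fw(1,2) up by simp
  have "(2 * (1 / (2 * G.s w))) *\<^sub>R Pj n (M (e + G.u w - e)) = w"
    using fw(1,4) unfolding geoP[OF G.geo_axioms] by simp
  then show "Dm ((x, e + G.u w), 1 / (2 * G.s w)) = (x, w)" unfolding Dm_eq[OF n(2) n(1)] by simp
qed

lemma Dm_bij: "bij_betw Dm S (cotangent_bundle_minus_zero X)"
proof (rule bij_betw_imageI[OF Dm_inj])
  show "Dm ` S = cotangent_bundle_minus_zero X"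
  proof
    show "Dm ` S \<subseteq> cotangent_bundle_minus_zero X" using Dm_maps by blast
    show "cotangent_bundle_minus_zero X \<subseteq> Dm ` S"
    proof
      fix y assume "y \<in> cotangent_bundle_minus_zero X"
      then obtain x w where y: "y = (x, w)" "x \<in> X" "w \<in> tangent_space X x" "w \<noteq> 0"
        unfolding cotangent_bundle_minus_zero_def by blast
      obtain n where n: "n \<noteq> 0" "tangent_space X x = {v. n \<bullet> v = 0}" using normal[OF y(2)] by blast
      have "n \<bullet> w = 0" using y(3) n(2) by simp
      note pre = Dm_preimage[OF y(2) n this y(4)]
      show "y \<in> Dm ` S" unfolding y(1) by (rule image_eqI[OF _ pre(1)]) (rule pre(2)[symmetric])
    qed
  qed
qed

end

lemma grad_smooth:
  fixes g :: "'a::euclidean_space \<Rightarrow> real"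
  assumes "smooth_on_open U g"
  shows "smooth_on_open U (grad g)"
proof -
  have o: "open U" using smooth_open[OF assms] .
  have "smooth_on_open U (\<lambda>y. \<Sum>i\<in>Basis. frechet_derivative g (at y) i *\<^sub>R i)"
  proof (rule smooth_sum[OF finite_Basis o])
    fix i :: 'a
    show "smooth_on_open U (\<lambda>y. frechet_derivative g (at y) i *\<^sub>R i)"
      by (rule smooth_scaleR[OF smooth_deriv[OF assms] smooth_const[OF o]])
  qed
  then show ?thesis unfolding grad_def[abs_def] .
qed

lemma grad_nz:
  fixes g :: "'a::euclidean_space \<Rightarrow> real"
  assumes "smooth_on_open U g" "y \<in> U" "frechet_derivative g (at y) \<noteq> (\<lambda>v. 0)"
  shows "grad g y \<noteq> 0"
proof
  assume g0: "grad g y = 0"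
  have lin: "linear (frechet_derivative g (at y))" using has_derivative_linear[OF smooth_hasderiv[OF assms(1,2)]] .
  have rep: "frechet_derivative g (at y) v = grad g y \<bullet> v" for v
    unfolding grad_def by (rule lin_repr[OF lin])
  have "frechet_derivative g (at y) = (\<lambda>v. 0)"
    by (rule ext) (simp add: rep g0)
  then show False using assms(3) by blast
qed

lemma smooth_Pj:
  fixes n m :: "'b::real_normed_vector \<Rightarrow> 'a::euclidean_space"
  assumes "smooth_on_open U n" "smooth_on_open U m" "\<forall>z\<in>U. n z \<noteq> 0"
  shows "smooth_on_open U (\<lambda>z. Pj (n z) (m z))"
  unfolding Pj_def
  by (intro smooth_diff' smooth_scaleR smooth_divide smooth_inner assms) (use assms(3) in auto)

context L3
begin

lemma M_bl: "bounded_linear M" using M_lin by (simp add: linear_conv_bounded_linear)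
lemma Mi_bl: "bounded_linear Mi" using Mi_lin by (simp add: linear_conv_bounded_linear)

lemma Dm_smooth: "smooth_on_set S Dm"
  unfolding smooth_on_set_def
proof
  fix z :: "('a \<times> 'a) \<times> real" assume "z \<in> S"
  then obtain x \<sigma> t where z: "z = ((x,\<sigma>),t)" "x \<in> X"
    unfolding S_def by blast
  obtain U and g :: "'a \<Rightarrow> real" where Ug: "open U" "x \<in> U" "smooth_on_open U g" "X \<inter> U = {y\<in>U. g y = 0}" "\<forall>y\<in>U. frechet_derivative g (at y) \<noteq> (\<lambda>v. 0)"
    using chart[OF z(2)] by blast
  define L where "L = (\<lambda>z::('a \<times> 'a) \<times> real. fst (fst z))"
  have Lbl: "bounded_linear L" unfolding L_def by (intro bounded_linear_compose[OF bounded_linear_fst bounded_linear_fst])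
  define V where "V = L -` U"
  have NV: "smooth_on_open V (\<lambda>z. grad g (L z))" unfolding V_def
    by (rule smooth_comp_bl[OF grad_smooth[OF Ug(3)] Lbl])
  have oV: "open V" using smooth_open[OF NV] .
  have zV: "z \<in> V" unfolding V_def L_def z(1) using Ug(2) by simp
  define F where "F = (\<lambda>z::('a \<times> 'a) \<times> real. (L z, (2 * snd z) *\<^sub>R Pj (grad g (L z)) (M (snd (fst z) - e))))"
  have mV: "smooth_on_open V (\<lambda>z::('a \<times> 'a) \<times> real. M (snd (fst z) - e))"
  proof -
    have "smooth_on_open V (\<lambda>z::('a \<times> 'a) \<times> real. M (snd (fst z)) - M e)"
      by (intro smooth_diff' smooth_const oV smooth_bl bounded_linear_compose[OF M_bl]
          bounded_linear_compose[OF bounded_linear_snd bounded_linear_fst])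
    then show ?thesis by (rule smooth_cong) (simp add: linear_diff[OF M_lin])
  qed
  have s2: "smooth_on_open V (\<lambda>z::('a \<times> 'a) \<times> real. 2 * snd z)"
    by (rule smooth_bl[OF oV]) (rule bounded_linear_compose[OF bounded_linear_mult_right bounded_linear_snd])
  have nz: "\<forall>z\<in>V. grad g (L z) \<noteq> 0" unfolding V_def using grad_nz[OF Ug(3)] Ug(5) by auto
  have P: "smooth_on_open V (\<lambda>z. Pj (grad g (L z)) (M (snd (fst z) - e)))"
    by (rule smooth_Pj[OF NV mV nz])
  have FV: "smooth_on_open V F" unfolding F_def
    by (rule smooth_pair[OF smooth_bl[OF oV Lbl] smooth_scaleR[OF s2 P]])
  have FD: "\<forall>y\<in>S \<inter> V. F y = Dm y"
  proof
    fix y assume "y \<in> S \<inter> V"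
    then obtain x' \<sigma>' t' where y: "y = ((x',\<sigma>'),t')" "x' \<in> X" "x' \<in> U"
      unfolding S_def V_def L_def by auto
    note ct = chart_tangent[OF Ug(1,3,4,5) y(3) y(2)]
    show "F y = Dm y" unfolding y(1) Dm_eq[OF ct] F_def L_def by simp
  qed
  show "\<exists>U F. open U \<and> z \<in> U \<and> smooth_on_open U F \<and> (\<forall>y\<in>S \<inter> U. F y = Dm y)"
    using oV zV FV FD by blast
qed

end

lemma smooth_cont: "smooth_on_open U f \<Longrightarrow> continuous_on U f"
  using differentiable_imp_continuous_on[OF smooth_diff] by blast

context L3
begin

lemma inv_smooth: "smooth_on_set (cotangent_bundle_minus_zero X) (inv_into S Dm)"
  unfolding smooth_on_set_def
proof
  fix z0 :: "'a \<times> 'a" assume "z0 \<in> cotangent_bundle_minus_zero X"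
  then obtain x0 w0 where z0: "z0 = (x0, w0)" "x0 \<in> X" "w0 \<in> tangent_space X x0" "w0 \<noteq> 0"
    unfolding cotangent_bundle_minus_zero_def by blast
  obtain U and g :: "'a \<Rightarrow> real" where Ug: "open U" "x0 \<in> U" "smooth_on_open U g" "X \<inter> U = {y\<in>U. g y = 0}" "\<forall>y\<in>U. frechet_derivative g (at y) \<noteq> (\<lambda>v. 0)"
    using chart[OF z0(2)] by blast
  define N where "N = (\<lambda>z::'a \<times> 'a. grad g (fst z))"
  define V0 :: "('a \<times> 'a) set" where "V0 = fst -` U"
  have NV0: "smooth_on_open V0 N" unfolding N_def V0_def
    by (rule smooth_comp_bl[OF grad_smooth[OF Ug(3)] bounded_linear_fst])
  have oV0: "open V0" using smooth_open[OF NV0] .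
  have fstV0: "smooth_on_open V0 (\<lambda>z::'a \<times> 'a. fst z)" by (rule smooth_bl[OF oV0 bounded_linear_fst])
  have sndV0: "smooth_on_open V0 (\<lambda>z::'a \<times> 'a. snd z)" by (rule smooth_bl[OF oV0 bounded_linear_snd])
  have peV0: "smooth_on_open V0 (\<lambda>z::'a \<times> 'a. fst z - e)" by (rule smooth_diff'[OF fstV0 smooth_const[OF oV0]])
  define npf where "npf = (\<lambda>z. N z \<bullet> (fst z - e))"
  have npV0: "smooth_on_open V0 npf" unfolding npf_def by (rule smooth_inner[OF NV0 peV0])
  define V1 where "V1 = V0 \<inter> npf -` (- {0})"
  have oV1: "open V1" unfolding V1_def
    by (rule continuous_open_preimage[OF smooth_cont[OF npV0] oV0 open_Compl[OF closed_singleton]])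
  have V10: "V1 \<subseteq> V0" unfolding V1_def by blast
  have npnz: "\<forall>z\<in>V1. npf z \<noteq> 0" unfolding V1_def by auto
  have NV1: "smooth_on_open V1 N" by (rule smooth_subset[OF NV0 oV1 V10])
  have sndV1: "smooth_on_open V1 (\<lambda>z::'a \<times> 'a. snd z)" by (rule smooth_subset[OF sndV0 oV1 V10])
  have peV1: "smooth_on_open V1 (\<lambda>z::'a \<times> 'a. fst z - e)" by (rule smooth_subset[OF peV0 oV1 V10])
  have npV1: "smooth_on_open V1 npf" by (rule smooth_subset[OF npV0 oV1 V10])
  define Af where "Af = (\<lambda>z. snd z - ((snd z \<bullet> (fst z - e)) / npf z) *\<^sub>R N z)"
  have AV1: "smooth_on_open V1 Af" unfolding Af_def
    by (rule smooth_diff'[OF sndV1 smooth_scaleR[OF smooth_divide[OF smooth_inner[OF sndV1 peV1] npV1 npnz] NV1]])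
  define af where "af = (\<lambda>z. Mi (Af z))"
  have aV1: "smooth_on_open V1 af" unfolding af_def by (rule smooth_bl_comp[OF AV1 Mi_bl])
  define bf where "bf = (\<lambda>z. (r2 / npf z) *\<^sub>R Mi (N z))"
  have bV1: "smooth_on_open V1 bf" unfolding bf_def
    by (rule smooth_scaleR[OF smooth_divide[OF smooth_const[OF oV1] npV1 npnz] smooth_bl_comp[OF NV1 Mi_bl]])
  define \<alpha>f where "\<alpha>f = (\<lambda>z. M (af z) \<bullet> af z)"
  have \<alpha>V1: "smooth_on_open V1 \<alpha>f" unfolding \<alpha>f_def by (rule smooth_inner[OF smooth_bl_comp[OF aV1 M_bl] aV1])
  define \<beta>f where "\<beta>f = (\<lambda>z. Af z \<bullet> bf z)"
  have \<beta>V1: "smooth_on_open V1 \<beta>f" unfolding \<beta>f_def by (rule smooth_inner[OF AV1 bV1])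
  define \<gamma>f where "\<gamma>f = (\<lambda>z. M (bf z) \<bullet> bf z - r2)"
  have \<gamma>V1: "smooth_on_open V1 \<gamma>f" unfolding \<gamma>f_def
    by (rule smooth_diff'[OF smooth_inner[OF smooth_bl_comp[OF bV1 M_bl] bV1] smooth_const[OF oV1]])
  define V2 where "V2 = V1 \<inter> \<alpha>f -` {0<..}"
  have oV2: "open V2" unfolding V2_def
    by (rule continuous_open_preimage[OF smooth_cont[OF \<alpha>V1] oV1 open_greaterThan])
  have V21: "V2 \<subseteq> V1" unfolding V2_def by blast
  define V where "V = V2 \<inter> \<gamma>f -` {..<0}"
  have oV: "open V" unfolding V_def
    by (rule continuous_open_preimage[OF continuous_on_subset[OF smooth_cont[OF \<gamma>V1] V21] oV2 open_lessThan])
  have VV1: "V \<subseteq> V1" unfolding V_def using V21 by blast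
  have \<alpha>pos: "\<forall>z\<in>V. \<alpha>f z > 0" unfolding V_def V2_def by auto
  have \<gamma>neg: "\<forall>z\<in>V. \<gamma>f z < 0" unfolding V_def by auto
  have \<alpha>V: "smooth_on_open V \<alpha>f" by (rule smooth_subset[OF \<alpha>V1 oV VV1])
  have \<beta>V: "smooth_on_open V \<beta>f" by (rule smooth_subset[OF \<beta>V1 oV VV1])
  have \<gamma>V: "smooth_on_open V \<gamma>f" by (rule smooth_subset[OF \<gamma>V1 oV VV1])
  have aV: "smooth_on_open V af" by (rule smooth_subset[OF aV1 oV VV1])
  have bV: "smooth_on_open V bf" by (rule smooth_subset[OF bV1 oV VV1])
  have fstV: "smooth_on_open V (\<lambda>z::'a \<times> 'a. fst z)" by (rule smooth_bl[OF oV bounded_linear_fst])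
  define discf where "discf = (\<lambda>z. \<beta>f z * \<beta>f z - \<alpha>f z * \<gamma>f z)"
  have dV: "smooth_on_open V discf" unfolding discf_def
    by (rule smooth_diff'[OF smooth_mult[OF \<beta>V \<beta>V] smooth_mult[OF \<alpha>V \<gamma>V]])
  have dgt: "discf z > \<beta>f z * \<beta>f z" if "z \<in> V" for z
  proof -
    have "\<alpha>f z * \<gamma>f z < 0" using \<alpha>pos \<gamma>neg that by (simp add: mult_pos_neg)
    then show ?thesis unfolding discf_def by simp
  qed
  have dpos: "\<forall>z\<in>V. discf z > 0"
  proof
    fix z assume "z \<in> V"
    have "0 \<le> \<beta>f z * \<beta>f z" by simp
    then show "discf z > 0" using dgt[OF \<open>z \<in> V\<close>] by linarith
  qed
  have sqV: "smooth_on_open V (\<lambda>z. sqrt (discf z))" by (rule smooth_sqrt[OF dV dpos])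
  define sf where "sf = (\<lambda>z. (- \<beta>f z + sqrt (discf z)) / \<alpha>f z)"
  have \<alpha>nz: "\<forall>z\<in>V. \<alpha>f z \<noteq> 0" using \<alpha>pos by auto
  have sV: "smooth_on_open V sf" unfolding sf_def
    by (rule smooth_divide[OF smooth_add[OF smooth_minus[OF \<beta>V] sqV] \<alpha>V \<alpha>nz])
  have spos: "\<forall>z\<in>V. sf z > 0"
  proof
    fix z assume z: "z \<in> V"
    have "sqrt (discf z) > sqrt (\<beta>f z * \<beta>f z)" using dgt[OF z] by (rule real_sqrt_less_mono)
    then have "sqrt (discf z) > \<bar>\<beta>f z\<bar>" by simp
    then have "- \<beta>f z + sqrt (discf z) > 0" by linarith
    then show "sf z > 0" unfolding sf_def using \<alpha>pos z by simp
  qed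
  define uf where "uf = (\<lambda>z. sf z *\<^sub>R af z + bf z)"
  have uV: "smooth_on_open V uf" unfolding uf_def by (rule smooth_add[OF smooth_scaleR[OF sV aV] bV])
  define F where "F = (\<lambda>z. ((fst z, e + uf z), 1 / (2 * sf z)))"
  have s2nz: "\<forall>z\<in>V. 2 * sf z \<noteq> 0" using spos by auto
  have FV: "smooth_on_open V F" unfolding F_def
    by (rule smooth_pair[OF smooth_pair[OF fstV smooth_add[OF smooth_const[OF oV] uV]]
          smooth_divide[OF smooth_const[OF oV] smooth_mult[OF smooth_const[OF oV] sV] s2nz]])
  have geo_pt: "geo M Mi r2 (y - e) (grad g y)" "tangent_space X y = {v. grad g y \<bullet> v = 0}" "grad g y \<noteq> 0"
    if "y \<in> X" "y \<in> U" for y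
  proof -
    note ct = chart_tangent[OF Ug(1,3,4,5) that(2) that(1)]
    show "tangent_space X y = {v. grad g y \<bullet> v = 0}" "grad g y \<noteq> 0" using ct by auto
    show "geo M Mi r2 (y - e) (grad g y)" by (rule geo_at[OF that(1) ct(2) ct(1)])
  qed
  have z0V: "z0 \<in> V"
  proof -
    note gp = geo_pt[OF z0(2) Ug(2)]
    interpret G: geo M Mi r2 "x0 - e" "grad g x0" by (rule gp(1))
    have nw: "grad g x0 \<bullet> w0 = 0" using z0(3) gp(2) by simp
    have "npf z0 = G.np" unfolding npf_def N_def z0(1) G.np_def by simp
    then have "npf z0 \<noteq> 0" using G.np_nz by simp
    moreover have "\<alpha>f z0 = G.\<alpha> w0"
      unfolding \<alpha>f_def af_def Af_def npf_def N_def z0(1) G.\<alpha>_def G.a_def G.A_def G.np_def by simp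
    moreover have "\<gamma>f z0 = G.\<gamma>"
      unfolding \<gamma>f_def bf_def npf_def N_def z0(1) G.\<gamma>_def G.b_def G.np_def by simp
    ultimately show ?thesis using G.alpha_pos[OF nw z0(4)] G.gamma_neg Ug(2)
      unfolding V_def V2_def V1_def V0_def z0(1) by simp
  qed
  have FI: "\<forall>z\<in>cotangent_bundle_minus_zero X \<inter> V. F z = inv_into S Dm z"
  proof
    fix z assume "z \<in> cotangent_bundle_minus_zero X \<inter> V"
    then obtain y w where z: "z = (y, w)" "y \<in> X" "w \<in> tangent_space X y" "w \<noteq> 0" "z \<in> V"
      unfolding cotangent_bundle_minus_zero_def by blast
    have yU: "y \<in> U" using z(1,5) VV1 V10 unfolding V0_def by auto
    note gp = geo_pt[OF z(2) yU]
    interpret G: geo M Mi r2 "y - e" "grad g y" by (rule gp(1))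
    have nw: "grad g y \<bullet> w = 0" using z(3) gp(2) by simp
    have sfe: "sf z = G.s w"
      unfolding sf_def discf_def \<alpha>f_def \<beta>f_def \<gamma>f_def af_def bf_def Af_def npf_def N_def z(1)
        G.s_def G.disc_def G.\<alpha>_def G.\<beta>_def G.\<gamma>_def G.a_def G.b_def G.A_def G.np_def
      by (simp add: power2_eq_square)
    have ufe: "uf z = G.u w"
      unfolding uf_def sfe G.u_def
      unfolding af_def bf_def Af_def npf_def N_def z(1) G.a_def G.b_def G.A_def G.np_def by simp
    note pre = Dm_preimage[OF z(2) gp(3) gp(2) nw z(4)]
    have "inv_into S Dm (y, w) = ((y, e + G.u w), 1 / (2 * G.s w))"
      by (rule inv_into_f_eq[OF Dm_inj pre(1) pre(2)])
    then show "F z = inv_into S Dm z" unfolding F_def z(1) using sfe ufe z(1) by simp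
  qed
  show "\<exists>U F. open U \<and> z0 \<in> U \<and> smooth_on_open U F \<and> (\<forall>y\<in>cotangent_bundle_minus_zero X \<inter> U. F y = inv_into S Dm y)"
    using oV z0V FV FI by blast
qed

end

theorem lemma3:
  fixes X :: "'a::euclidean_space set"
    and Q :: "'a \<Rightarrow> real" and e :: 'a and c :: real
    and q :: "'a \<Rightarrow> real" and Sigma :: "'a set"
    and Phi :: "'a \<Rightarrow> 'a \<Rightarrow> real" and dxPhi :: "'a \<Rightarrow> 'a \<Rightarrow> 'a \<Rightarrow> real"
    and Z :: "('a \<times> 'a) set"
    and D :: "('a \<times> 'a) \<times> real \<Rightarrow> 'a \<times> 'a"
  assumes dim: "DIM('a) \<ge> 3"
    and hyp: "smooth_hypersurface X"
    and Q: "quadratic_form Q" "pos_def Q"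
    and q_def: "q = (\<lambda>\<sigma>. c + Q (\<sigma> - e))"
    and center: "q e < 1"
    and Sigma_def: "Sigma = {\<sigma>. q \<sigma> = 1}"
    and secant: "\<And>x y s. x \<in> X \<Longrightarrow> y \<in> X \<Longrightarrow> x \<noteq> y \<Longrightarrow> x + s *\<^sub>R (y - x) \<notin> Sigma"
    and tangent: "\<And>x v s. x \<in> X \<Longrightarrow> v \<in> tangent_space X x \<Longrightarrow> v \<noteq> 0 \<Longrightarrow> x + s *\<^sub>R v \<notin> Sigma"
    and Phi_def: "Phi = (\<lambda>x \<sigma>. frechet_derivative q (at \<sigma>) (x - \<sigma>))"
    and Z_def: "Z = {(x, \<sigma>). x \<in> X \<and> \<sigma> \<in> Sigma \<and> Phi x \<sigma> = 0}"
    and dxPhi_def: "dxPhi = (\<lambda>x \<sigma>. frechet_derivative (\<lambda>y. Phi y \<sigma>) (at x))"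
    and D_def: "D = (\<lambda>((x, \<sigma>), t). (x, covector_rep X x (\<lambda>v. t * dxPhi x \<sigma> v)))"
  shows "(\<forall>(x, \<sigma>)\<in>Z. \<exists>v\<in>tangent_space X x. dxPhi x \<sigma> v \<noteq> 0)
       \<and> diffeomorphism_sets {(z, t). z \<in> Z \<and> t > 0} (cotangent_bundle_minus_zero X) D"
proof -
  obtain B where B: "bilinear B" "\<And>u v. B u v = B v u" "\<And>v. Q v = B v v"
    using Q(1) unfolding quadratic_form_def by blast
  have linB2: "linear (B u)" for u using B(1) unfolding bilinear_def by blast
  have linB1: "linear (\<lambda>x. B x v)" for v using B(1) unfolding bilinear_def by blast
  define M where "M u = (\<Sum>j\<in>Basis. B u j *\<^sub>R j)" for u
  have MB: "B u v = M u \<bullet> v" for u v unfolding M_def by (rule lin_repr[OF linB2])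
  have Mi: "M u \<bullet> i = B u i" for u i using MB by simp
  have M_lin: "linear M"
  proof (rule linearI)
    fix x y :: 'a
    show "M (x + y) = M x + M y"
      by (rule euclidean_eqI) (simp add: Mi inner_add_left linear_add[OF linB1])
  next
    fix r :: real and x :: 'a
    show "M (r *\<^sub>R x) = r *\<^sub>R M x"
      by (rule euclidean_eqI) (simp add: Mi linear_scale[OF linB1])
  qed
  have M_sym: "M u \<bullet> v = M v \<bullet> u" for u v using B(2) MB by metis
  have QM: "Q v = M v \<bullet> v" for v using B(3) MB by simp
  have M_pos: "u \<noteq> 0 \<Longrightarrow> M u \<bullet> u > 0" for u using Q(2) QM unfolding pos_def_def by simp
  have M_inj: "inj M"
    unfolding linear_injective_0[OF M_lin]
  proof (intro allI impI)
    fix x assume "M x = 0"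
    then show "x = 0" using M_pos[of x] by (cases "x = 0") auto
  qed
  have M_surj: "surj M" by (rule linear_inj_imp_surj[OF M_lin M_inj])
  define Mi where "Mi = inv M"
  have Mi1: "M (Mi y) = y" for y unfolding Mi_def by (rule surj_f_inv_f[OF M_surj])
  have Mi2: "Mi (M u) = u" for u unfolding Mi_def by (rule inv_f_f[OF M_inj])
  have Mi_lin: "linear Mi"
  proof (rule linearI)
    fix x y :: 'a
    have "M (Mi (x + y)) = M (Mi x + Mi y)" by (simp add: Mi1 linear_add[OF M_lin])
    then show "Mi (x + y) = Mi x + Mi y" using M_inj by (simp add: inj_eq)
  next
    fix r :: real and x :: 'a
    have "M (Mi (r *\<^sub>R x)) = M (r *\<^sub>R Mi x)" by (simp add: Mi1 linear_scale[OF M_lin])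
    then show "Mi (r *\<^sub>R x) = r *\<^sub>R Mi x" using M_inj by (simp add: inj_eq)
  qed
  have M_bl: "bounded_linear M" using M_lin by (simp add: linear_conv_bounded_linear)
  have qM: "q \<sigma> = c + M (\<sigma> - e) \<bullet> (\<sigma> - e)" for \<sigma> unfolding q_def QM ..
  have c1: "c < 1" using center qM[of e] by (simp add: linear_0[OF M_lin])
  have dq: "(q has_derivative (\<lambda>h. 2 * (M (\<sigma> - e) \<bullet> h))) (at \<sigma>)" for \<sigma>
  proof -
    have d1: "((\<lambda>\<sigma>. \<sigma> - e) has_derivative (\<lambda>h. h)) (at \<sigma>)"
      by (rule has_derivative_eq_rhs[OF has_derivative_diff[OF has_derivative_ident has_derivative_const]]) simp
    have d2: "((\<lambda>\<sigma>. M (\<sigma> - e)) has_derivative (\<lambda>h. M h)) (at \<sigma>)"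
      by (rule bounded_linear.has_derivative[OF M_bl d1])
    have d3: "((\<lambda>\<sigma>. c + M (\<sigma> - e) \<bullet> (\<sigma> - e)) has_derivative (\<lambda>h. 0 + (M (\<sigma> - e) \<bullet> h + M h \<bullet> (\<sigma> - e)))) (at \<sigma>)"
      by (rule has_derivative_add[OF has_derivative_const has_derivative_inner[OF d2 d1]])
    have "(\<lambda>h. 0 + (M (\<sigma> - e) \<bullet> h + M h \<bullet> (\<sigma> - e))) = (\<lambda>h. 2 * (M (\<sigma> - e) \<bullet> h))"
      using M_sym by (intro ext) simp
    then show ?thesis using d3 unfolding qM[abs_def] by simp
  qed
  have Phi_eq: "Phi x \<sigma> = 2 * (M (\<sigma> - e) \<bullet> (x - \<sigma>))" for x \<sigma>
    unfolding Phi_def frechet_derivative_at[OF dq, symmetric] by simp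
  have dxPhi_eq: "dxPhi x \<sigma> = (\<lambda>v. 2 * (M (\<sigma> - e) \<bullet> v))" for x \<sigma>
  proof -
    have d1: "((\<lambda>y. y - \<sigma>) has_derivative (\<lambda>h. h)) (at x)"
      by (rule has_derivative_eq_rhs[OF has_derivative_diff[OF has_derivative_ident has_derivative_const]]) simp
    have "((\<lambda>y. 2 * (M (\<sigma> - e) \<bullet> (y - \<sigma>))) has_derivative (\<lambda>v. 2 * (M (\<sigma> - e) \<bullet> v))) (at x)"
      by (rule has_derivative_mult_right[OF has_derivative_inner_right[OF d1]])
    then show ?thesis unfolding dxPhi_def Phi_eq by (rule frechet_derivative_at[symmetric])
  qed
  have tang: "c + M (x + s *\<^sub>R v - e) \<bullet> (x + s *\<^sub>R v - e) \<noteq> 1"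
    if "x \<in> X" "v \<in> tangent_space X x" "v \<noteq> 0" for x v s
    using tangent[OF that, of s] unfolding Sigma_def qM by simp
  have dim2: "DIM('a) \<ge> 2" using dim by linarith
  interpret L: L3 X M Mi c e
    by (rule L3.intro[OF hyp M_lin M_sym M_pos Mi1 Mi2 Mi_lin c1 dim2 tang])
  have SZ: "{(z, t). z \<in> Z \<and> t > 0} = L.S"
    unfolding L.S_def Z_def Sigma_def qM Phi_eq L.r2_def by auto
  have DD: "D = L.Dm"
    unfolding D_def L.Dm_def dxPhi_eq ..
  have first: "\<forall>(x, \<sigma>)\<in>Z. \<exists>v\<in>tangent_space X x. dxPhi x \<sigma> v \<noteq> 0"
  proof (intro ballI, clarify)
    fix x \<sigma> assume "(x, \<sigma>) \<in> Z"
    then have h: "x \<in> X" "M (\<sigma> - e) \<bullet> (\<sigma> - e) = L.r2" "M (\<sigma> - e) \<bullet> (x - \<sigma>) = 0"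
      unfolding Z_def Sigma_def qM Phi_eq L.r2_def by auto
    show "\<exists>v\<in>tangent_space X x. dxPhi x \<sigma> v \<noteq> 0"
      unfolding dxPhi_eq using L.first_conj[OF h] by simp
  qed
  show ?thesis
    unfolding diffeomorphism_sets_def SZ DD using first L.Dm_bij L.Dm_smooth L.inv_smooth by blast
qed

end
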